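(* Let $\Omega\subset\{|z|>e^\gamma\}$ ($\gamma\in(0,1)$) be an unbounded simply connected domain and $\varphi:\mathcal H\to\Omega$ a conformal map with $|\varphi(\xi_n)|\to\infty$ whenever $|\xi_n|\to\infty$, such that for some $M$ we have $|\varphi(\xi)|\le M|\varphi(\xi')|$ for all $\xi,\xi'\in Q_T\setminus Q_{T/8}$ and all large $T$. Then the function $\beta_\infty:\mathbb R\to\mathbb R$, $\beta_\infty(t)=\limsup_{T\to+\infty}\beta_{\varphi_T}(1/T,t)$, is convex, with $\beta_\infty(0)=0$ and $\beta_\infty(2)\le1$.
   Context: $\mathcal H=\{\Re\xi>0\}$; $Q_T=\{0<\Re\xi<4T,\ |\Im\xi|<4T\}$; $\varphi_T(\xi)=\varphi(T\xi)/|\varphi(T)|$; $\beta_h(r,t)=\log\int_I|h'(r+iy)|^tdy/\log(1/r)$ with $I=[-2,-1]\cup[1,2]$. *)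

theory Defs
  imports "HOL-Analysis.Analysis" "HOL-Library.Liminf_Limsup"
begin

definition halfplane :: "complex set" where
  "halfplane = {\<xi>. Re \<xi> > 0}"

definition QT :: "real \<Rightarrow> complex set" where
  "QT T = {\<xi>. 0 < Re \<xi> \<and> Re \<xi> < 4 * T \<and> \<bar>Im \<xi>\<bar> < 4 * T}"

definition phiT :: "(complex \<Rightarrow> complex) \<Rightarrow> real \<Rightarrow> complex \<Rightarrow> complex" where
  "phiT \<phi> T = (\<lambda>\<xi>. \<phi> (of_real T * \<xi>) / of_real (cmod (\<phi> (of_real T))))"

definition Iset :: "real set" where
  "Iset = {-2..-1} \<union> {1..2}"

definition beta :: "(complex \<Rightarrow> complex) \<Rightarrow> real \<Rightarrow> real \<Rightarrow> real" where
  "beta h r t = ln (integral Iset (\<lambda>y. cmod (deriv h (Complex r y)) powr t)) / ln (1 / r)"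

definition beta_inf :: "(complex \<Rightarrow> complex) \<Rightarrow> real \<Rightarrow> ereal" where
  "beta_inf \<phi> t = Limsup at_top (\<lambda>T. ereal (beta (phiT \<phi> T) (1 / T) t))"

end

theory Submission
  imports Defs "HOL-Complex_Analysis.Complex_Analysis"
begin


definition BK :: real where
  "BK = exp(pi * exp(pi * (2 + 2 * 1 + 12 * (2/3) / (1 - 2/3))))"

lemma BK_ge1: "BK \<ge> 1" unfolding BK_def by simp

lemma schottky_BK:
  assumes "g holomorphic_on cball 0 1" "cmod (g 0) \<le> 1"
    "\<And>z. z \<in> cball 0 1 \<Longrightarrow> \<not>(g z = 0 \<or> g z = 1)" "cmod z \<le> 2/3"
  shows "cmod (g z) \<le> BK"
proof -
  have "cmod (g z) \<le> exp(pi * exp(pi * (2 + 2 * 1 + 12 * (2/3) / (1 - 2/3))))"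
    by (rule Schottky[of g 1 "2/3" z]) (use assms in auto)
  then show ?thesis by (simp only: BK_def)
qed


lemma schottky_step:
  fixes f :: "complex \<Rightarrow> complex"
  assumes holf: "f holomorphic_on ball z0 r" and injf: "inj_on f (ball z0 r)"
    and r: "r > 0" and q: "q \<notin> f ` ball z0 r" and z: "cmod (z - z0) \<le> r / 2"
  shows "cmod (f z - q) \<le> BK^2 * cmod (f z0 - q)"
    and "cmod (f z0 - q) \<le> BK^2 * cmod (f z - q)"
proof -
  define c where "c = complex_of_real (3 * r / 4)"
  have c0: "c \<noteq> 0" using r by (simp add: c_def)
  define S where "S = ball (0::complex) (4/3)"
  have mapS: "z0 + c * \<zeta> \<in> ball z0 r" if "\<zeta> \<in> S" for \<zeta>
  proof -
    have "cmod (c * \<zeta>) = 3 * r / 4 * cmod \<zeta>" using r by (simp add: c_def norm_mult)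
    also have "\<dots> < 3 * r / 4 * (4/3)" using that r unfolding S_def by (intro mult_strict_left_mono) auto
    finally show ?thesis by (simp add: dist_norm)
  qed
  have z0in: "z0 \<in> ball z0 r" using r by simp
  have qz0: "q - f z0 \<noteq> 0" using q z0in by force
  define h where "h = (\<lambda>\<zeta>. (q - f (z0 + c * \<zeta>)) / (q - f z0))"
  have holh: "h holomorphic_on S"
    unfolding h_def
    by (intro holomorphic_intros holomorphic_on_compose_gen[OF _ holf, unfolded o_def] mapS) (auto simp: qz0 intro: mapS)
  have hnz: "h \<zeta> \<noteq> 0" if "\<zeta> \<in> S" for \<zeta>
    using q mapS[OF that] qz0 by (auto simp: h_def)
  have "contractible S" unfolding S_def by (simp add: convex_imp_contractible)
  then obtain g where holg: "g holomorphic_on S" and hg: "\<And>\<zeta>. \<zeta> \<in> S \<Longrightarrow> h \<zeta> = g \<zeta> ^ 2"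
    using contractible_imp_holomorphic_sqrt[OF holh _ hnz] by metis
  have 0: "(0::complex) \<in> S" unfolding S_def by simp
  have h0: "h 0 = 1" using qz0 by (simp add: h_def)
  have g0sq: "g 0 ^ 2 = 1" using hg[OF 0] h0 by simp
  define g1 where "g1 = (\<lambda>\<zeta>. g 0 * g \<zeta>)"
  have hg1: "h \<zeta> = g1 \<zeta> ^ 2" if "\<zeta> \<in> S" for \<zeta>
    using hg[OF that] g0sq by (simp add: g1_def power_mult_distrib)
  have g10: "g1 0 = 1" using g0sq by (simp add: g1_def power2_eq_square)
  have holg1: "g1 holomorphic_on S" unfolding g1_def by (intro holomorphic_intros holg)
  have g1nz: "g1 \<zeta> \<noteq> 0" if "\<zeta> \<in> S" for \<zeta> using hg1[OF that] hnz[OF that] by auto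
  have g1n1: "g1 \<zeta> \<noteq> -1" if "\<zeta> \<in> S" for \<zeta>
  proof
    assume "g1 \<zeta> = -1"
    then have "h \<zeta> = 1" using hg1[OF that] by simp
    then have "f (z0 + c * \<zeta>) = f z0" using qz0 by (simp add: h_def)
    then have "z0 + c * \<zeta> = z0" using injf mapS[OF that] z0in by (meson inj_onD)
    then have "\<zeta> = 0" using c0 by simp
    then show False using g10 \<open>g1 \<zeta> = -1\<close> by simp
  qed
  have cb: "cball (0::complex) 1 \<subseteq> S" unfolding S_def by auto
  define \<zeta> where "\<zeta> = (z - z0) / c"
  have z_eq: "z = z0 + c * \<zeta>" using c0 by (simp add: \<zeta>_def)
  have nz: "cmod \<zeta> \<le> 2/3"
  proof -
    have cc: "cmod c = 3 * r / 4" using r by (simp add: c_def)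
    have "cmod \<zeta> = cmod (z - z0) / (3 * r / 4)" by (simp add: \<zeta>_def norm_divide cc)
    also have "\<dots> \<le> (r/2) / (3 * r / 4)" using z r by (intro divide_right_mono) auto
    also have "\<dots> = 2/3" using r by (simp add: field_simps)
    finally show ?thesis .
  qed
  have \<zeta>S: "\<zeta> \<in> S" using nz cb by auto
  have up: "cmod (- g1 \<zeta>) \<le> BK"
  proof (rule schottky_BK[of "\<lambda>w. - g1 w"])
    show "(\<lambda>\<zeta>. - g1 \<zeta>) holomorphic_on cball 0 1"
      using holg1 cb by (intro holomorphic_intros) (auto intro: holomorphic_on_subset)
    show "cmod (- g1 0) \<le> 1" using g10 by simp
    show "\<not> (- g1 z = 0 \<or> - g1 z = 1)" if "z \<in> cball 0 1" for z
    proof -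
      have zS: "z \<in> S" using that cb by auto
      have a: "g1 z \<noteq> 0" "g1 z \<noteq> -1" using g1nz[OF zS] g1n1[OF zS] by auto
      show ?thesis using a by (metis minus_minus neg_0_equal_iff_equal)
    qed
    show "cmod \<zeta> \<le> 2/3" using nz by auto
  qed
  have lo: "cmod (1 / (- g1 \<zeta>)) \<le> BK"
  proof (rule schottky_BK[of "\<lambda>w. 1 / (- g1 w)"])
    show "(\<lambda>\<zeta>. 1 / (- g1 \<zeta>)) holomorphic_on cball 0 1"
      using holg1 cb g1nz by (intro holomorphic_intros) (auto intro: holomorphic_on_subset)
    show "cmod (1 / (- g1 0)) \<le> 1" using g10 by simp
    show "\<not> (1 / (- g1 z) = 0 \<or> 1 / (- g1 z) = 1)" if "z \<in> cball 0 1" for z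
    proof -
      have zS: "z \<in> S" using that cb by auto
      have a: "g1 z \<noteq> 0" "g1 z \<noteq> -1" using g1nz[OF zS] g1n1[OF zS] by auto
      show ?thesis
      proof
        assume "1 / (- g1 z) = 0 \<or> 1 / (- g1 z) = 1"
        then show False
        proof
          assume "1 / (- g1 z) = 1"
          then have "- g1 z = 1" by (metis div_by_1 divide_divide_eq_right mult_1)
          then show False using a by (metis minus_minus)
        qed (use a in simp)
      qed
    qed
    show "cmod \<zeta> \<le> 2/3" using nz by auto
  qed
  have hz: "h \<zeta> = (q - f z) / (q - f z0)" by (simp add: h_def z_eq)
  have normh: "cmod (h \<zeta>) = cmod (g1 \<zeta>) ^ 2" using hg1[OF \<zeta>S] by (simp add: norm_power)
  have "cmod (g1 \<zeta>) ^ 2 \<le> BK ^ 2" using up by (intro power_mono) auto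
  moreover have "cmod (h \<zeta>) = cmod (q - f z) / cmod (q - f z0)" using hz by (simp add: norm_divide)
  moreover have "cmod (q - f z0) > 0" using qz0 by simp
  ultimately have "cmod (q - f z) \<le> BK^2 * cmod (q - f z0)"
    using normh by (simp add: divide_le_eq)
  then show "cmod (f z - q) \<le> BK^2 * cmod (f z0 - q)" by (simp add: norm_minus_commute)
  have gpos: "cmod (g1 \<zeta>) > 0" using g1nz[OF \<zeta>S] by simp
  have "1 \<le> BK * cmod (g1 \<zeta>)" using lo gpos by (simp add: norm_divide divide_le_eq)
  then have "1 \<le> (BK * cmod (g1 \<zeta>))^2" by (simp add: one_le_power)
  then have "1 \<le> BK^2 * cmod (h \<zeta>)" using normh by (simp add: power_mult_distrib)
  moreover have "cmod (h \<zeta>) = cmod (q - f z) / cmod (q - f z0)" using hz by (simp add: norm_divide)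
  moreover have "cmod (q - f z0) > 0" using qz0 by simp
  ultimately have "cmod (q - f z0) \<le> BK^2 * cmod (q - f z)"
    by (simp add: field_simps)
  then show "cmod (f z0 - q) \<le> BK^2 * cmod (f z - q)" by (simp add: norm_minus_commute)
qed


lemma koebe_weak:
  fixes f :: "complex \<Rightarrow> complex"
  assumes holf: "f holomorphic_on ball z0 r" and injf: "inj_on f (ball z0 r)" and r: "r > 0"
  shows "ball (f z0) (r * cmod (deriv f z0) / (2 * (BK^2 + 1))) \<subseteq> f ` ball z0 r"
proof
  fix w assume w: "w \<in> ball (f z0) (r * cmod (deriv f z0) / (2 * (BK^2 + 1)))"
  show "w \<in> f ` ball z0 r"
  proof (rule ccontr)
    assume q: "w \<notin> f ` ball z0 r"
    have bnd: "cmod (f x - f z0) \<le> (BK^2 + 1) * cmod (f z0 - w)" if "cmod (z0 - x) = r / 2" for x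
    proof -
      have "cmod (x - z0) \<le> r/2" using that by (simp add: norm_minus_commute)
      then have "cmod (f x - w) \<le> BK^2 * cmod (f z0 - w)" by (rule schottky_step(1)[OF holf injf r q])
      then have "cmod (f x - f z0) \<le> BK^2 * cmod (f z0 - w) + cmod (f z0 - w)"
        using norm_triangle_ineq[of "f x - w" "w - f z0"] by (simp add: norm_minus_commute)
      then show ?thesis by (simp add: algebra_simps)
    qed
    have sub: "cball z0 (r/2) \<subseteq> ball z0 r" using r by auto
    have hol2: "(\<lambda>x. f x - f z0) holomorphic_on ball z0 (r/2)"
      using holf sub by (intro holomorphic_intros) (meson ball_subset_cball holomorphic_on_subset subset_trans)
    have cont2: "continuous_on (cball z0 (r/2)) (\<lambda>x. f x - f z0)"
      using holf sub by (intro continuous_intros) (auto intro: holomorphic_on_imp_continuous_on continuous_on_subset)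
    have "cmod ((deriv ^^ 1) (\<lambda>x. f x - f z0) z0) \<le> fact 1 * ((BK^2 + 1) * cmod (f z0 - w)) / (r/2) ^ 1"
      by (rule Cauchy_inequality[OF hol2 cont2]) (use r bnd in auto)
    moreover have "deriv (\<lambda>x. f x - f z0) z0 = deriv f z0"
    proof -
      have "f field_differentiable at z0"
        using holf r by (intro holomorphic_on_imp_differentiable_at[of _ "ball z0 r"]) auto
      then show ?thesis by simp
    qed
    ultimately have "cmod (deriv f z0) \<le> (BK^2 + 1) * cmod (f z0 - w) * 2 / r" by simp
    also have "\<dots> = 2 * (BK^2 + 1) * cmod (f z0 - w) / r" by simp
    finally have "cmod (deriv f z0) \<le> 2 * (BK^2 + 1) * cmod (f z0 - w) / r" .
    then have "r * cmod (deriv f z0) / (2 * (BK^2 + 1)) \<le> cmod (f z0 - w)"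
      using r by (simp add: field_simps add_pos_nonneg)
    then show False using w by (simp add: dist_norm)
  qed
qed


lemma open_halfplane: "open halfplane"
  unfolding halfplane_def by (simp add: open_halfspace_Re_gt)

lemma deriv_lower_inv:
  fixes \<phi> :: "complex \<Rightarrow> complex"
  assumes holo: "\<phi> holomorphic_on halfplane" and inj: "inj_on \<phi> halfplane"
    and z: "Re z > 0" and d: "d > 0" and bl: "ball (\<phi> z) d \<subseteq> \<phi> ` halfplane"
  shows "d / (4 * Re z) \<le> cmod (deriv \<phi> z)"
proof -
  obtain g where holg: "g holomorphic_on \<phi> ` halfplane"
    and dg: "\<And>\<xi>. \<xi> \<in> halfplane \<Longrightarrow> deriv \<phi> \<xi> * deriv g (\<phi> \<xi>) = 1"
    and gi: "\<And>\<xi>. \<xi> \<in> halfplane \<Longrightarrow> g (\<phi> \<xi>) = \<xi>"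
    using holomorphic_has_inverse[OF holo open_halfplane inj] by metis
  have zH: "z \<in> halfplane" using z by (simp add: halfplane_def)
  define x where "x = Re z"
  have x: "x > 0" using z by (simp add: x_def)
  have gH: "Re (g w) > 0" if wb: "w \<in> ball (\<phi> z) d" for w
  proof -
    obtain \<xi> where "\<xi> \<in> halfplane" "w = \<phi> \<xi>" using bl wb by blast
    then show ?thesis using gi by (auto simp: halfplane_def)
  qed
  have den: "g w + cnj z \<noteq> 0" if "w \<in> ball (\<phi> z) d" for w
  proof -
    have "Re (g w + cnj z) > 0" using gH[OF that] z by simp
    then show ?thesis by (metis zero_complex.sel(1) less_irrefl)
  qed
  define G where "G = (\<lambda>w. (g w - z) / (g w + cnj z))"
  have Gb: "cmod (G w) \<le> 1" if "w \<in> ball (\<phi> z) d" for w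
  proof -
    have "cmod (g w - z) \<le> cmod (g w + cnj z)"
    proof -
      have "(cmod (g w - z))^2 = (Re (g w) - Re z)^2 + (Im (g w) - Im z)^2"
        by (simp add: cmod_power2)
      also have "\<dots> \<le> (Re (g w) + Re z)^2 + (Im (g w) - Im z)^2"
        using gH[OF that] z by (simp add: power2_eq_square algebra_simps)
      also have "\<dots> = (cmod (g w + cnj z))^2" by (simp add: cmod_power2)
      finally show ?thesis by (simp add: power2_le_iff_abs_le)
    qed
    then show ?thesis using den[OF that] by (simp add: G_def norm_divide divide_le_eq)
  qed
  have opb: "open (ball (\<phi> z) d)" by simp
  have holgb: "g holomorphic_on ball (\<phi> z) d" using holg bl by (rule holomorphic_on_subset)
  have holG: "G holomorphic_on ball (\<phi> z) d"
    unfolding G_def using holgb den by (intro holomorphic_intros) auto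
  have sub: "cball (\<phi> z) (d/2) \<subseteq> ball (\<phi> z) d" using d by auto
  have "cmod ((deriv ^^ 1) G (\<phi> z)) \<le> fact 1 * 1 / (d/2) ^ 1"
  proof (rule Cauchy_inequality)
    show "G holomorphic_on ball (\<phi> z) (d / 2)"
      using holG sub by (meson ball_subset_cball holomorphic_on_subset subset_trans)
    show "continuous_on (cball (\<phi> z) (d / 2)) G"
      using holG sub by (meson holomorphic_on_imp_continuous_on continuous_on_subset)
    show "cmod (G w) \<le> 1" if "cmod (\<phi> z - w) = d / 2" for w
      using that d by (intro Gb) (simp add: dist_norm)
  qed (use d in auto)
  then have Gd: "cmod (deriv G (\<phi> z)) \<le> 2 / d" by simp
  have ctr: "\<phi> z \<in> ball (\<phi> z) d" using d by simp
  have gz: "g (\<phi> z) = z" using gi[OF zH] .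
  have dgz: "(g has_field_derivative deriv g (\<phi> z)) (at (\<phi> z))"
    using holgb opb ctr by (rule holomorphic_derivI)
  have "(G has_field_derivative
          (deriv g (\<phi> z) * (g (\<phi> z) + cnj z) - (g (\<phi> z) - z) * deriv g (\<phi> z)) / ((g (\<phi> z) + cnj z) * (g (\<phi> z) + cnj z)))
          (at (\<phi> z))"
    unfolding G_def using den[OF ctr] dgz by (intro derivative_eq_intros) auto
  moreover have "z + cnj z = 2 * x" by (simp add: x_def complex_add_cnj)
  ultimately have "(G has_field_derivative deriv g (\<phi> z) / (2 * x)) (at (\<phi> z))"
    using x by (simp add: gz field_simps)
  then have "deriv G (\<phi> z) = deriv g (\<phi> z) / (2 * x)" by (rule DERIV_imp_deriv)
  then have "cmod (deriv g (\<phi> z)) / (2 * x) \<le> 2 / d" using Gd x by (simp add: norm_divide)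
  then have gle: "cmod (deriv g (\<phi> z)) \<le> 4 * x / d" using x d by (simp add: field_simps)
  have "cmod (deriv \<phi> z) * cmod (deriv g (\<phi> z)) = 1" using dg[OF zH] by (metis norm_mult norm_one)
  then have gpos: "cmod (deriv g (\<phi> z)) > 0" by (metis mult_zero_right zero_less_norm_iff norm_eq_zero zero_neq_one)
  have "d / (4 * x) \<le> 1 / cmod (deriv g (\<phi> z))"
    using gle gpos x d by (simp add: field_simps)
  also have "\<dots> = cmod (deriv \<phi> z)" using \<open>cmod (deriv \<phi> z) * cmod (deriv g (\<phi> z)) = 1\<close> gpos
    by (simp add: field_simps)
  finally show ?thesis by (simp add: x_def)
qed


definition Pb :: "(complex \<Rightarrow> complex) \<Rightarrow> complex \<Rightarrow> real \<Rightarrow> bool" where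
  "Pb \<phi> z \<epsilon> \<longleftrightarrow> ball (\<phi> z) (\<epsilon> * cmod (\<phi> z)) \<subseteq> \<phi> ` halfplane"

lemma Pb_mono: "Pb \<phi> z \<epsilon> \<Longrightarrow> \<epsilon>' \<le> \<epsilon> \<Longrightarrow> Pb \<phi> z \<epsilon>'"
  unfolding Pb_def by (meson mult_right_mono norm_ge_zero subset_ball order_trans)

lemma ball_halfplane: "Re z0 > 0 \<Longrightarrow> ball z0 (Re z0) \<subseteq> halfplane"
proof
  fix w assume "Re z0 > 0" "w \<in> ball z0 (Re z0)"
  then have "\<bar>Re z0 - Re w\<bar> < Re z0"
    using abs_Re_le_cmod[of "z0 - w"] by (simp add: dist_norm)
  then show "w \<in> halfplane" by (simp add: halfplane_def)
qed

lemma Pb_step: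
  fixes \<phi> :: "complex \<Rightarrow> complex"
  assumes holo: "\<phi> holomorphic_on halfplane" and inj: "inj_on \<phi> halfplane"
    and nz: "0 \<notin> \<phi> ` halfplane"
    and z0: "Re z0 > 0" and zz: "cmod (z - z0) \<le> Re z0 / 2"
    and P: "Pb \<phi> z0 \<epsilon>" and e: "\<epsilon> \<ge> 0"
  shows "Pb \<phi> z (\<epsilon> / BK^4)"
proof -
  have sub: "ball z0 (Re z0) \<subseteq> halfplane" using z0 by (rule ball_halfplane)
  have holb: "\<phi> holomorphic_on ball z0 (Re z0)" using holo sub by (rule holomorphic_on_subset)
  have injb: "inj_on \<phi> (ball z0 (Re z0))" using inj sub by (rule inj_on_subset)
  have nq: "q \<notin> \<phi> ` ball z0 (Re z0)" if "q \<notin> \<phi> ` halfplane" for q using that sub by blast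
  have B1: "BK \<ge> 1" by (rule BK_ge1)
  have normz: "cmod (\<phi> z) \<le> BK^2 * cmod (\<phi> z0)"
    using schottky_step(1)[OF holb injb z0 nq[OF nz] zz] by simp
  show ?thesis unfolding Pb_def
  proof
    fix w assume w: "w \<in> ball (\<phi> z) (\<epsilon> / BK ^ 4 * cmod (\<phi> z))"
    show "w \<in> \<phi> ` halfplane"
    proof (rule ccontr)
      assume wn: "w \<notin> \<phi> ` halfplane"
      have "cmod (\<phi> z0 - w) \<le> BK^2 * cmod (\<phi> z - w)"
        by (rule schottky_step(2)[OF holb injb z0 nq[OF wn] zz])
      also have "\<dots> < BK^2 * (\<epsilon> / BK ^ 4 * cmod (\<phi> z))"
        using w B1 by (intro mult_strict_left_mono) (auto simp: dist_norm norm_minus_commute)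
      also have "\<dots> = \<epsilon> / BK^2 * cmod (\<phi> z)" using B1 by (simp add: field_simps power2_eq_square
            power4_eq_xxxx)
      also have "\<dots> \<le> \<epsilon> / BK^2 * (BK^2 * cmod (\<phi> z0))"
        using normz e B1 by (intro mult_left_mono) auto
      also have "\<dots> = \<epsilon> * cmod (\<phi> z0)" using B1 by simp
      finally have "w \<in> ball (\<phi> z0) (\<epsilon> * cmod (\<phi> z0))" by (simp add: dist_norm)
      then show False using P wn unfolding Pb_def by blast
    qed
  qed
qed

lemma deriv_upper:
  fixes \<phi> :: "complex \<Rightarrow> complex"
  assumes holo: "\<phi> holomorphic_on halfplane" and inj: "inj_on \<phi> halfplane"
    and nz: "0 \<notin> \<phi> ` halfplane" and z0: "Re z0 > 0"
  shows "cmod (deriv \<phi> z0) \<le> 2 * BK^2 * cmod (\<phi> z0) / Re z0"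
proof -
  have sub: "ball z0 (Re z0) \<subseteq> halfplane" using z0 by (rule ball_halfplane)
  have holb: "\<phi> holomorphic_on ball z0 (Re z0)" using holo sub by (rule holomorphic_on_subset)
  have injb: "inj_on \<phi> (ball z0 (Re z0))" using inj sub by (rule inj_on_subset)
  have n0: "0 \<notin> \<phi> ` ball z0 (Re z0)" using nz sub by blast
  have sub2: "cball z0 (Re z0 / 2) \<subseteq> ball z0 (Re z0)" using z0 by auto
  have "cmod ((deriv ^^ 1) \<phi> z0) \<le> fact 1 * (BK^2 * cmod (\<phi> z0)) / (Re z0 / 2) ^ 1"
  proof (rule Cauchy_inequality)
    show "\<phi> holomorphic_on ball z0 (Re z0 / 2)"
      using holb sub2 by (meson ball_subset_cball holomorphic_on_subset subset_trans)
    show "continuous_on (cball z0 (Re z0 / 2)) \<phi>"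
      using holb sub2 by (meson holomorphic_on_imp_continuous_on continuous_on_subset)
    show "cmod (\<phi> x) \<le> BK^2 * cmod (\<phi> z0)" if "cmod (z0 - x) = Re z0 / 2" for x
      using schottky_step(1)[OF holb injb z0 n0, of x] that by (simp add: norm_minus_commute)
  qed (use z0 in auto)
  then show ?thesis by (simp add: field_simps)
qed


lemma div_pow_mono: "(\<epsilon>::real) \<ge> 0 \<Longrightarrow> \<epsilon> / (BK^4)^(Suc n) \<le> \<epsilon> / BK^4"
proof -
  assume e: "\<epsilon> \<ge> 0"
  have B1: "BK^4 \<ge> 1" using BK_ge1 by simp
  have "1 \<le> (BK^4)^n" using B1 by (rule one_le_power)
  then have "BK^4 * 1 \<le> BK^4 * (BK^4)^n" using B1 by (intro mult_left_mono) auto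
  then have "BK^4 \<le> (BK^4)^(Suc n)" by simp
  moreover have p: "0 < BK^4" using B1 by linarith
  moreover have "0 < (BK^4)^(Suc n) * BK^4" using p by simp
  ultimately show ?thesis using e by (intro divide_left_mono) auto
qed

lemma Pb_right:
  fixes \<phi> :: "complex \<Rightarrow> complex"
  assumes holo: "\<phi> holomorphic_on halfplane" and inj: "inj_on \<phi> halfplane"
    and nz: "0 \<notin> \<phi> ` halfplane"
  shows "Re z0 > 0 \<Longrightarrow> Im z = Im z0 \<Longrightarrow> Re z0 \<le> Re z \<Longrightarrow> Re z \<le> (3/2)^n * Re z0
    \<Longrightarrow> Pb \<phi> z0 \<epsilon> \<Longrightarrow> \<epsilon> \<ge> 0 \<Longrightarrow> Pb \<phi> z (\<epsilon> / (BK^4)^n)"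
proof (induction n arbitrary: z0 \<epsilon>)
  case 0
  then have "z = z0" by (simp add: complex_eq_iff)
  then show ?case using 0 by simp
next
  case (Suc n)
  have B1: "BK^4 \<ge> 1" using BK_ge1 by simp
  show ?case
  proof (cases "Re z \<le> 3/2 * Re z0")
    case True
    have "cmod (z - z0) = Re z - Re z0" using Suc.prems
      by (simp add: cmod_def power2_eq_square)
    then have "cmod (z - z0) \<le> Re z0 / 2" using True by simp
    then have "Pb \<phi> z (\<epsilon> / BK^4)" using Pb_step[OF holo inj nz] Suc.prems by blast
    moreover have "\<epsilon> / (BK^4)^Suc n \<le> \<epsilon> / BK^4"
      using Suc.prems by (intro div_pow_mono) auto
    ultimately show ?thesis by (rule Pb_mono)
  next
    case False
    define z1 where "z1 = Complex (3/2 * Re z0) (Im z0)"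
    have "z1 - z0 = of_real (Re z0 / 2)" by (simp add: z1_def complex_eq_iff)
    then have "cmod (z1 - z0) = Re z0 / 2" using Suc.prems by (simp only: norm_of_real)
    then have P1: "Pb \<phi> z1 (\<epsilon> / BK^4)" using Pb_step[OF holo inj nz, of z0 z1] Suc.prems by simp
    have "Pb \<phi> z (\<epsilon> / BK^4 / (BK^4)^n)"
    proof (rule Suc.IH[OF _ _ _ _ P1])
      show "0 < Re z1" using Suc.prems by (simp add: z1_def)
      show "Im z = Im z1" using Suc.prems by (simp add: z1_def)
      show "Re z1 \<le> Re z" using False by (simp add: z1_def)
      show "Re z \<le> (3 / 2) ^ n * Re z1" using Suc.prems by (simp add: z1_def)
      show "0 \<le> \<epsilon> / BK ^ 4" using Suc.prems BK_ge1 by simp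
    qed
    then show ?thesis by (simp add: field_simps)
  qed
qed

lemma Pb_left:
  fixes \<phi> :: "complex \<Rightarrow> complex"
  assumes holo: "\<phi> holomorphic_on halfplane" and inj: "inj_on \<phi> halfplane"
    and nz: "0 \<notin> \<phi> ` halfplane"
  shows "Re z0 > 0 \<Longrightarrow> Im z = Im z0 \<Longrightarrow> Re z \<le> Re z0 \<Longrightarrow> (2/3)^n * Re z0 \<le> Re z
    \<Longrightarrow> Pb \<phi> z0 \<epsilon> \<Longrightarrow> \<epsilon> \<ge> 0 \<Longrightarrow> Pb \<phi> z (\<epsilon> / (BK^4)^n)"
proof (induction n arbitrary: z0 \<epsilon>)
  case 0
  then have "z = z0" by (simp add: complex_eq_iff)
  then show ?case using 0 by simp
next
  case (Suc n)
  have B1: "BK^4 \<ge> 1" using BK_ge1 by simp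
  show ?case
  proof (cases "2/3 * Re z0 \<le> Re z")
    case True
    have "cmod (z - z0) = Re z0 - Re z" using Suc.prems
      by (simp add: cmod_def power2_eq_square)
    then have "cmod (z - z0) \<le> Re z0 / 2" using True Suc.prems(1) by linarith
    then have "Pb \<phi> z (\<epsilon> / BK^4)" using Pb_step[OF holo inj nz] Suc.prems by blast
    moreover have "\<epsilon> / (BK^4)^Suc n \<le> \<epsilon> / BK^4"
      using Suc.prems by (intro div_pow_mono) auto
    ultimately show ?thesis by (rule Pb_mono)
  next
    case False
    define z1 where "z1 = Complex (2/3 * Re z0) (Im z0)"
    have "z1 - z0 = of_real (- Re z0 / 3)" by (simp add: z1_def complex_eq_iff)
    then have "cmod (z1 - z0) = Re z0 / 3" using Suc.prems by (simp only: norm_of_real)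
    then have "cmod (z1 - z0) \<le> Re z0 / 2" using Suc.prems by simp
    then have P1: "Pb \<phi> z1 (\<epsilon> / BK^4)" using Pb_step[OF holo inj nz, of z0 z1] Suc.prems by simp
    have "Pb \<phi> z (\<epsilon> / BK^4 / (BK^4)^n)"
    proof (rule Suc.IH[OF _ _ _ _ P1])
      show "0 < Re z1" using Suc.prems by (simp add: z1_def)
      show "Im z = Im z1" using Suc.prems by (simp add: z1_def)
      show "Re z \<le> Re z1" using False by (simp add: z1_def)
      show "(2 / 3) ^ n * Re z1 \<le> Re z" using Suc.prems by (simp add: z1_def)
      show "0 \<le> \<epsilon> / BK ^ 4" using Suc.prems BK_ge1 by simp
    qed
    then show ?thesis by (simp add: field_simps)
  qed
qed

lemma Pb_vert:
  fixes \<phi> :: "complex \<Rightarrow> complex"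
  assumes holo: "\<phi> holomorphic_on halfplane" and inj: "inj_on \<phi> halfplane"
    and nz: "0 \<notin> \<phi> ` halfplane"
    and z0: "Re z0 > 0" and re: "Re z = Re z0" and im: "\<bar>Im z - Im z0\<bar> \<le> Re z0"
    and P: "Pb \<phi> z0 \<epsilon>" and e: "\<epsilon> \<ge> 0"
  shows "Pb \<phi> z (\<epsilon> / (BK^4)^2)"
proof -
  define m where "m = Complex (Re z0) ((Im z + Im z0)/2)"
  have "cmod (m - z0) = \<bar>Im z - Im z0\<bar> / 2" by (simp add: m_def cmod_def)
  then have "cmod (m - z0) \<le> Re z0 / 2" using im by simp
  then have Pm: "Pb \<phi> m (\<epsilon> / BK^4)" using Pb_step[OF holo inj nz z0 _ P e] by simp
  have "z - m = Complex 0 ((Im z - Im z0)/2)" using re by (simp add: m_def complex_eq_iff field_simps)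
  then have "cmod (z - m) = \<bar>Im z - Im z0\<bar> / 2" by (simp add: cmod_def)
  then have "cmod (z - m) \<le> Re m / 2" using im by (simp add: m_def)
  then have "Pb \<phi> z (\<epsilon> / BK^4 / BK^4)"
    using Pb_step[OF holo inj nz _ _ Pm] z0 e BK_ge1 by (simp add: m_def)
  then show ?thesis by (simp add: power2_eq_square field_simps)
qed


lemma Pb_line:
  fixes \<phi> :: "complex \<Rightarrow> complex"
  assumes holo: "\<phi> holomorphic_on halfplane" and inj: "inj_on \<phi> halfplane"
    and nz: "0 \<notin> \<phi> ` halfplane"
    and P1: "Pb \<phi> 1 \<epsilon>0" and e0: "\<epsilon>0 \<ge> 0" and s: "\<bar>s\<bar> \<ge> 1" and n: "\<bar>s\<bar> \<le> (3/2)^n"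
  shows "Pb \<phi> (Complex 1 s) (\<epsilon>0 / (BK^4)^(2*n+2))"
proof -
  define a where "a = \<bar>s\<bar>"
  have a1: "a \<ge> 1" using s by (simp add: a_def)
  have B: "BK^4 > 0" using BK_ge1 by simp
  have Pa: "Pb \<phi> (Complex a 0) (\<epsilon>0 / (BK^4)^n)"
    using Pb_right[OF holo inj nz, of 1 "Complex a 0" n \<epsilon>0] P1 e0 a1 n by (simp add: a_def)
  have Pv: "Pb \<phi> (Complex a s) (\<epsilon>0 / (BK^4)^n / (BK^4)^2)"
    using Pb_vert[OF holo inj nz, of "Complex a 0" "Complex a s", OF _ _ _ Pa] a1 e0 B
    by (simp add: a_def)
  have "(2/3)^n * a \<le> (2/3)^n * (3/2)^n" using n by (simp add: a_def)
  also have "\<dots> = 1" by (simp add: power_mult_distrib[symmetric])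
  finally have an: "(2/3)^n * a \<le> 1" .
  have Pl: "Pb \<phi> (Complex 1 s) (\<epsilon>0 / (BK^4)^n / (BK^4)^2 / (BK^4)^n)"
    using Pb_left[OF holo inj nz, of "Complex a s" "Complex 1 s" n, OF _ _ _ _ Pv] a1 an e0 B
    by simp
  have e1: "\<epsilon>0 / (BK^4)^n / (BK^4)^2 / (BK^4)^n = \<epsilon>0 / ((BK^4)^n * (BK^4)^2 * (BK^4)^n)"
    by (simp add: divide_divide_eq_left)
  have e2: "(BK^4)^n * (BK^4)^2 * (BK^4)^n = (BK^4)^(n + 2 + n)" by (simp only: power_add)
  have e3: "n + 2 + n = 2*n+2" by simp
  show ?thesis using Pl unfolding e1 e2 e3 .
qed

lemma Pb_line_powr:
  fixes \<phi> :: "complex \<Rightarrow> complex"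
  assumes holo: "\<phi> holomorphic_on halfplane" and inj: "inj_on \<phi> halfplane"
    and nz: "0 \<notin> \<phi> ` halfplane"
    and P1: "Pb \<phi> 1 \<epsilon>0" and e0: "\<epsilon>0 > 0"
  obtains c \<kappa> where "c > 0" "\<kappa> \<ge> 0" "\<And>s. \<bar>s\<bar> \<ge> 1 \<Longrightarrow> Pb \<phi> (Complex 1 s) (c * \<bar>s\<bar> powr (- \<kappa>))"
proof -
  define L where "L = ln BK"
  have L0: "L \<ge> 0" using BK_ge1 by (simp add: L_def)
  have l15: "ln (3/2::real) > 0" by simp
  define \<kappa> where "\<kappa> = 8 * L / ln (3/2)"
  define c where "c = \<epsilon>0 / BK^16"
  have BKpos: "BK > 0" using BK_ge1 by simp
  show ?thesis
  proof
    show "c > 0" using e0 BKpos by (simp add: c_def)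
    show "\<kappa> \<ge> 0" using L0 l15 by (simp add: \<kappa>_def)
    fix s :: real assume s: "\<bar>s\<bar> \<ge> 1"
    define a where "a = \<bar>s\<bar>"
    have a1: "a \<ge> 1" using s by (simp add: a_def)
    define n where "n = nat \<lceil>ln a / ln (3/2)\<rceil>"
    have lna: "ln a \<ge> 0" using a1 by simp
    have n1: "real n \<ge> ln a / ln (3/2)" unfolding n_def by linarith
    have n2: "real n \<le> ln a / ln (3/2) + 1" unfolding n_def using lna l15
      by (simp add: of_nat_nat)
    have "a = exp (ln a)" using a1 by simp
    also have "\<dots> \<le> exp (real n * ln (3/2))" using n1 l15 by (simp add: field_simps)
    also have "\<dots> = (3/2)^n" by (simp add: exp_of_nat_mult)
    finally have an: "\<bar>s\<bar> \<le> (3/2)^n" by (simp add: a_def)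
    have P: "Pb \<phi> (Complex 1 s) (\<epsilon>0 / (BK^4)^(2*n+2))" by (rule Pb_line[OF holo inj nz P1 _ s an]) (use e0 in simp)?
    have "(BK^4)^(2*n+2) = BK^(4*(2*n+2))" by (simp only: power_mult)
    also have "\<dots> = exp (ln (BK^(4*(2*n+2))))" using BKpos by simp
    also have "\<dots> = exp (real (4 * (2*n+2)) * L)" using BKpos by (simp only: ln_realpow L_def)
    also have "\<dots> \<le> exp (16 * L + \<kappa> * ln a)"
    proof -
      have "real (4 * (2*n+2)) * L = 8 * L * real n + 8 * L" by (simp add: algebra_simps)
      also have "\<dots> \<le> 8 * L * (ln a / ln (3/2) + 1) + 8 * L"
        using n2 L0 by (intro add_right_mono mult_left_mono) auto
      also have "\<dots> \<le> 16 * L + \<kappa> * ln a" using l15 by (simp add: \<kappa>_def field_simps)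
      finally show ?thesis by simp
    qed
    also have "\<dots> = BK^16 * a powr \<kappa>"
      using BKpos a1 ln_realpow[of BK 16] exp_ln[of "BK^16"] by (simp add: exp_add L_def powr_def exp_of_nat_mult[symmetric] mult.commute)
    finally have bnd: "(BK^4)^(2*n+2) \<le> BK^16 * a powr \<kappa>" .
    have "c * \<bar>s\<bar> powr (- \<kappa>) = \<epsilon>0 / (BK^16 * a powr \<kappa>)"
      using a1 by (simp add: c_def a_def powr_minus field_simps)
    also have "\<dots> \<le> \<epsilon>0 / (BK^4)^(2*n+2)"
    proof (rule divide_left_mono)
      show "(BK^4)^(2*n+2) \<le> BK^16 * a powr \<kappa>" by (rule bnd)
      show "0 \<le> \<epsilon>0" using e0 by simp
      have "0 < (BK^4)^(2*n+2)" using BKpos by simp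
      moreover have "0 < BK^16 * a powr \<kappa>" using BKpos a1 by simp
      ultimately show "0 < BK^16 * a powr \<kappa> * (BK^4)^(2*n+2)" by simp
    qed
    finally show "Pb \<phi> (Complex 1 s) (c * \<bar>s\<bar> powr (- \<kappa>))" using P Pb_mono by blast
  qed
qed


lemma fmeas_ball: "ball (c::complex) r \<in> fmeasurable lborel"
  unfolding fmeasurable_def using emeasure_lborel_ball_finite[of c r] by (simp add: borel_open)

lemma content_ball_complex: "r \<ge> 0 \<Longrightarrow> measure lborel (ball (c::complex) r) = r^2 * measure lborel (ball (0::complex) 1)"
  using content_ball_conv_unit_ball[of r c] by simp

lemma disjoint_balls_sum:
  fixes a :: "'i \<Rightarrow> complex" and r :: "'i \<Rightarrow> real"
  assumes J: "finite J" and r0: "\<And>j. j \<in> J \<Longrightarrow> r j \<ge> 0" and R: "R \<ge> 0"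
    and sub: "\<And>j. j \<in> J \<Longrightarrow> ball (a j) (r j) \<subseteq> ball 0 R"
    and dis: "pairwise (\<lambda>i j. disjnt (ball (a i) (r i)) (ball (a j) (r j))) J"
  shows "(\<Sum>j\<in>J. (r j)^2) \<le> R^2"
proof -
  define U where "U = measure lborel (ball (0::complex) 1)"
  have U: "U > 0" unfolding U_def by (rule content_ball_pos) simp
  have "(\<Sum>j\<in>J. (r j)^2) * U = (\<Sum>j\<in>J. measure lborel (ball (a j) (r j)))"
    unfolding sum_distrib_right
  proof (rule sum.cong)
    fix j assume "j \<in> J"
    then show "(r j)^2 * U = measure lborel (ball (a j) (r j))"
      using content_ball_complex[of "r j" "a j"] r0 by (simp add: U_def)
  qed simp
  also have "\<dots> = measure lborel (\<Union>j\<in>J. ball (a j) (r j))"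
  proof (rule measure_UNION'[symmetric])
    show "finite J" by (rule J)
    show "ball (a j) (r j) \<in> fmeasurable lborel" if "j \<in> J" for j by (rule fmeas_ball)
    show "pairwise (\<lambda>i j. disjnt (ball (a i) (r i)) (ball (a j) (r j))) J" by (rule dis)
  qed
  also have "\<dots> \<le> measure lborel (ball (0::complex) R)"
  proof (rule measure_mono_fmeasurable)
    show "(\<Union>j\<in>J. ball (a j) (r j)) \<subseteq> ball 0 R" using sub by auto
    show "(\<Union>j\<in>J. ball (a j) (r j)) \<in> sets lborel" by (simp add: borel_open open_UN)
    show "ball (0::complex) R \<in> fmeasurable lborel" by (rule fmeas_ball)
  qed
  also have "\<dots> = R^2 * U" using content_ball_complex[OF R, of 0] by (simp add: U_def)
  finally show ?thesis using U by simp
qed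


lemma koebe_sum:
  fixes \<phi> :: "complex \<Rightarrow> complex" and z :: "'i \<Rightarrow> complex"
  assumes holo: "\<phi> holomorphic_on halfplane" and inj: "inj_on \<phi> halfplane"
    and J: "finite J" and \<rho>: "\<rho> > 0" and R: "R \<ge> 0"
    and sub: "\<And>j. j \<in> J \<Longrightarrow> ball (z j) \<rho> \<subseteq> halfplane"
    and bnd: "\<And>j \<zeta>. j \<in> J \<Longrightarrow> \<zeta> \<in> ball (z j) \<rho> \<Longrightarrow> cmod (\<phi> \<zeta>) \<le> R"
    and sep: "\<And>i j. i \<in> J \<Longrightarrow> j \<in> J \<Longrightarrow> i \<noteq> j \<Longrightarrow> cmod (z i - z j) \<ge> 2 * \<rho>"
  shows "(\<Sum>j\<in>J. (\<rho> * cmod (deriv \<phi> (z j)) / (2 * (BK^2 + 1)))^2) \<le> (R + 1)^2"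
proof -
  define r where "r = (\<lambda>j. \<rho> * cmod (deriv \<phi> (z j)) / (2 * (BK^2 + 1)))"
  have kb: "ball (\<phi> (z j)) (r j) \<subseteq> \<phi> ` ball (z j) \<rho>" if "j \<in> J" for j
    unfolding r_def
    by (rule koebe_weak[OF holomorphic_on_subset[OF holo sub[OF that]] inj_on_subset[OF inj sub[OF that]] \<rho>])
  have "(\<Sum>j\<in>J. (r j)^2) \<le> (R + 1)^2"
  proof (rule disjoint_balls_sum[OF J])
    show "0 \<le> r j" for j using \<rho> by (simp add: r_def add_pos_nonneg)
    show "0 \<le> R + 1" using R by simp
    show "ball (\<phi> (z j)) (r j) \<subseteq> ball 0 (R + 1)" if jJ: "j \<in> J" for j
    proof
      fix w assume "w \<in> ball (\<phi> (z j)) (r j)"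
      then obtain \<zeta> where "\<zeta> \<in> ball (z j) \<rho>" "w = \<phi> \<zeta>" using kb[OF jJ] by blast
      then show "w \<in> ball 0 (R + 1)" using bnd[OF jJ] by fastforce
    qed
    show "pairwise (\<lambda>i j. disjnt (ball (\<phi> (z i)) (r i)) (ball (\<phi> (z j)) (r j))) J"
      unfolding pairwise_def disjnt_def
    proof (intro ballI impI equals0I)
      fix i j w assume i: "i \<in> J" and j: "j \<in> J" and ij: "i \<noteq> j"
        and w: "w \<in> ball (\<phi> (z i)) (r i) \<inter> ball (\<phi> (z j)) (r j)"
      obtain \<zeta>1 where z1: "\<zeta>1 \<in> ball (z i) \<rho>" "w = \<phi> \<zeta>1" using kb[OF i] w by blast
      obtain \<zeta>2 where z2: "\<zeta>2 \<in> ball (z j) \<rho>" "w = \<phi> \<zeta>2" using kb[OF j] w by blast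
      have "\<zeta>1 = \<zeta>2" using inj z1 z2 sub[OF i] sub[OF j] by (metis inj_onD subsetD)
      then have "dist (z i) (z j) < 2 * \<rho>" using z1 z2 dist_triangle_less_add[of "z i" \<zeta>1 \<rho> "z j" \<rho>]
        by (simp add: dist_commute)
      then show False using sep[OF i j ij] by (simp add: dist_norm)
    qed
  qed
  then show ?thesis by (simp add: r_def)
qed


lemma partition_max:
  fixes h :: "real \<Rightarrow> real" and N :: nat
  assumes cont: "continuous_on {1..2} h" and N: "N > 0"
  obtains y where "\<And>j. j < N \<Longrightarrow> y j \<in> {1 + real j / N .. 1 + real (Suc j) / N}"
    "integral {1..2} h \<le> (\<Sum>j<N. h (y j)) / N"
proof -
  define P where "P = (\<lambda>j::nat. {1 + real j / N .. 1 + real (Suc j) / N})"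
  have Psub: "P j \<subseteq> {1..2}" if "j < N" for j
  proof -
    have "real (Suc j) \<le> real N" using that by simp
    then have "real (Suc j) / N \<le> 1" using N by (simp add: divide_le_eq)
    then show ?thesis unfolding P_def by (auto simp: field_simps)
  qed
  have "\<forall>j. \<exists>y. j < N \<longrightarrow> y \<in> P j \<and> (\<forall>x\<in>P j. h x \<le> h y)"
  proof
    fix j
    show "\<exists>y. j < N \<longrightarrow> y \<in> P j \<and> (\<forall>x\<in>P j. h x \<le> h y)"
    proof (cases "j < N")
      case True
      have "real j / N \<le> real (Suc j) / N" using N by (intro divide_right_mono) auto
      then have "compact (P j)" "P j \<noteq> {}" unfolding P_def by auto
      moreover have "continuous_on (P j) h" using cont Psub[OF True] by (rule continuous_on_subset)
      ultimately obtain y where "y \<in> P j" "\<forall>x\<in>P j. h x \<le> h y"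
        using continuous_attains_sup by metis
      then show ?thesis by blast
    qed auto
  qed
  then obtain y where y: "\<And>j. j < N \<Longrightarrow> y j \<in> P j \<and> (\<forall>x\<in>P j. h x \<le> h (y j))" by metis
  have intP: "integral (P j) h \<le> h (y j) / N" if "j < N" for j
  proof -
    have "integral (P j) h \<le> integral (P j) (\<lambda>_. h (y j))"
    proof (rule integral_le)
      show "h integrable_on P j" unfolding P_def
        by (rule integrable_continuous_real) (rule continuous_on_subset[OF cont Psub[OF that, unfolded P_def]])
      show "(\<lambda>_. h (y j)) integrable_on P j" unfolding P_def by (rule integrable_const_ivl)
      show "h x \<le> h (y j)" if "x \<in> P j" for x using y[OF \<open>j < N\<close>] that by blast
    qed
    also have "\<dots> = h (y j) / N" unfolding P_def using N by (simp add: field_simps)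
    finally show ?thesis .
  qed
  have add: "integral {1 .. 1 + real k / N} h = (\<Sum>j<k. integral (P j) h)" if "k \<le> N" for k
    using that
  proof (induction k)
    case 0
    then show ?case by simp
  next
    case (Suc k)
    have sub: "{1 .. 1 + real (Suc k) / N} \<subseteq> {1..2}"
      using Suc.prems N by (auto simp: divide_le_eq)
    have "integral {1 .. 1 + real (Suc k) / N} h = integral {1 .. 1 + real k / N} h + integral (P k) h"
      unfolding P_def
    proof (rule Henstock_Kurzweil_Integration.integral_combine[symmetric])
      show "1 \<le> 1 + real k / real N" by simp
      show "1 + real k / real N \<le> 1 + real (Suc k) / real N" using N by (simp add: divide_right_mono)
      show "h integrable_on {1..1 + real (Suc k) / real N}"
        by (rule integrable_continuous_real) (use cont sub in \<open>auto intro: continuous_on_subset\<close>)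
    qed
    then show ?case using Suc by simp
  qed
  have "integral {1..2} h = (\<Sum>j<N. integral (P j) h)" using add[of N] N by simp
  also have "\<dots> \<le> (\<Sum>j<N. h (y j) / N)" by (intro sum_mono intP) simp
  also have "\<dots> = (\<Sum>j<N. h (y j)) / N" by (simp add: sum_divide_distrib)
  finally show ?thesis using that y unfolding P_def by blast
qed


lemma cont_deriv_line:
  fixes \<phi> :: "complex \<Rightarrow> complex"
  assumes holo: "\<phi> holomorphic_on halfplane"
  shows "continuous_on S (\<lambda>y. deriv \<phi> (Complex 1 (c * y)))"
proof (rule continuous_on_compose2[of halfplane "deriv \<phi>"])
  show "continuous_on halfplane (deriv \<phi>)"
    by (intro holomorphic_on_imp_continuous_on holomorphic_deriv holo open_halfplane)
  show "continuous_on S (\<lambda>y. Complex 1 (c * y))" by (intro continuous_intros)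
  show "(\<lambda>y. Complex 1 (c * y)) ` S \<subseteq> halfplane" by (auto simp: halfplane_def)
qed

lemma area_half:
  fixes \<phi> :: "complex \<Rightarrow> complex"
  assumes holo: "\<phi> holomorphic_on halfplane" and inj: "inj_on \<phi> halfplane"
    and T: "T \<ge> 1" and \<sigma>: "\<bar>\<sigma>\<bar> = 1" and R: "R \<ge> 0"
    and bnd: "\<And>\<zeta>. 0 < Re \<zeta> \<Longrightarrow> Re \<zeta> < 2 \<Longrightarrow> T - 1 \<le> \<bar>Im \<zeta>\<bar> \<Longrightarrow> \<bar>Im \<zeta>\<bar> \<le> 2 * T + 1
       \<Longrightarrow> cmod (\<phi> \<zeta>) \<le> R"
  shows "integral {1..2} (\<lambda>y. cmod (deriv \<phi> (Complex 1 (\<sigma> * T * y)))^2)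
           \<le> 128 * (BK^2 + 1)^2 * (R + 1)^2 / T"
proof -
  define h where "h = (\<lambda>y. cmod (deriv \<phi> (Complex 1 (\<sigma> * T * y)))^2)"
  have conth: "continuous_on {1..2} h" unfolding h_def
    by (intro continuous_intros cont_deriv_line[OF holo, of _ "\<sigma> * T"])
  define N where "N = nat \<lceil>T\<rceil>"
  have ceil: "real_of_int \<lceil>T\<rceil> \<ge> T" "real_of_int \<lceil>T\<rceil> < T + 1" by linarith+
  have "real N = real_of_int \<lceil>T\<rceil>" unfolding N_def using T by simp
  then have NT: "real N \<ge> T" "real N \<le> T + 1" using ceil by linarith+
  have N0: "N > 0" using NT T by linarith
  obtain y where y: "\<And>j. j < N \<Longrightarrow> y j \<in> {1 + real j / N .. 1 + real (Suc j) / N}"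
    and int: "integral {1..2} h \<le> (\<Sum>j<N. h (y j)) / N"
    using partition_max[OF conth N0] by metis
  define z where "z = (\<lambda>j. Complex 1 (\<sigma> * T * y j))"
  have y12: "1 \<le> y j \<and> y j \<le> 2" if "j < N" for j
  proof -
    have "real (Suc j) \<le> N" using that by simp
    then have "real (Suc j) / N \<le> 1" using N0 by (simp add: divide_le_eq)
    moreover have "real j / N \<ge> 0" by simp
    moreover have "1 + real j / N \<le> y j" "y j \<le> 1 + real (Suc j) / N" using y[OF that] by auto
    ultimately show ?thesis by linarith
  qed
  have cls: "(\<Sum>j\<in>J. h (y j)) \<le> 64 * (BK^2 + 1)^2 * (R + 1)^2"
    if J: "J \<subseteq> {..<N}" and sepJ: "\<And>i j. i \<in> J \<Longrightarrow> j \<in> J \<Longrightarrow> i < j \<Longrightarrow> i + 2 \<le> j" for J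
  proof -
    have fin: "finite J" using J finite_subset by blast
    have "(\<Sum>j\<in>J. (1/4 * cmod (deriv \<phi> (z j)) / (2 * (BK^2 + 1)))^2) \<le> (R + 1)^2"
    proof (rule koebe_sum[OF holo inj fin _ R])
      show "(0::real) < 1/4" by simp
      show "ball (z j) (1/4) \<subseteq> halfplane" if "j \<in> J" for j
      proof
        fix w assume "w \<in> ball (z j) (1/4)"
        then have "\<bar>Re (z j) - Re w\<bar> < 1/4" using abs_Re_le_cmod[of "z j - w"] by (simp add: dist_norm)
        then have "\<bar>1 - Re w\<bar> < 1/4" by (simp add: z_def)
        moreover have "1 - Re w \<le> \<bar>1 - Re w\<bar>" by simp
        ultimately have "Re w > 0" by linarith
        then show "w \<in> halfplane" by (simp add: halfplane_def)
      qed
      show "cmod (\<phi> \<zeta>) \<le> R" if jJ: "j \<in> J" and zb: "\<zeta> \<in> ball (z j) (1/4)" for j \<zeta>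
      proof (rule bnd)
        have jN: "j < N" using J jJ by auto
        have d: "cmod (z j - \<zeta>) < 1/4" using zb by (simp add: dist_norm)
        have re: "\<bar>Re (z j) - Re \<zeta>\<bar> < 1/4" using abs_Re_le_cmod[of "z j - \<zeta>"] d by simp
        have im: "\<bar>Im (z j) - Im \<zeta>\<bar> < 1/4" using abs_Im_le_cmod[of "z j - \<zeta>"] d by simp
        have imz: "\<bar>Im (z j)\<bar> = T * y j" using \<sigma> T y12[OF jN] by (simp add: z_def abs_mult)
        have "T \<le> T * y j" "T * y j \<le> 2 * T" using T y12[OF jN] by auto
        moreover have r1: "Re (z j) = 1" by (simp add: z_def)
        moreover have "Re (z j) - Re \<zeta> \<le> \<bar>Re (z j) - Re \<zeta>\<bar>" "-(Re (z j) - Re \<zeta>) \<le> \<bar>Re (z j) - Re \<zeta>\<bar>"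
          by simp_all
        moreover have "\<bar>Im (z j)\<bar> - \<bar>Im \<zeta>\<bar> \<le> \<bar>Im (z j) - Im \<zeta>\<bar>" by (rule abs_triangle_ineq2)
        moreover have "\<bar>Im \<zeta>\<bar> - \<bar>Im (z j)\<bar> \<le> \<bar>Im (z j) - Im \<zeta>\<bar>"
          using abs_triangle_ineq2[of "Im \<zeta>" "Im (z j)"] by (simp add: abs_minus_commute)
        ultimately show "0 < Re \<zeta>" "Re \<zeta> < 2" "T - 1 \<le> \<bar>Im \<zeta>\<bar>" "\<bar>Im \<zeta>\<bar> \<le> 2 * T + 1"
          using re im imz by linarith+
      qed
      show "2 * (1/4) \<le> cmod (z i - z j)" if iJ: "i \<in> J" and jJ: "j \<in> J" and ij: "i \<noteq> j" for i j
      proof -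
        have key: "1 / N \<le> \<bar>y a - y b\<bar>" if "a \<in> J" "b \<in> J" "a < b" for a b
        proof -
          have ab: "a + 2 \<le> b" using sepJ that by blast
          have aN: "a < N" "b < N" using that J by auto
          have "y a \<le> 1 + real (Suc a) / N" "1 + real b / N \<le> y b" using y[OF aN(1)] y[OF aN(2)] by auto
          moreover have "real (Suc a) / N + 1 / N \<le> real b / N"
            using ab N0 by (simp add: divide_right_mono add_divide_distrib[symmetric])
          ultimately have "1 / N \<le> y b - y a" by linarith
          then show ?thesis by simp
        qed
        have k: "1 / N \<le> \<bar>y i - y j\<bar>"
        proof (cases "i < j")
          case True then show ?thesis using key iJ jJ by blast
        next
          case False then have "j < i" using ij by simp
          then show ?thesis using key[of j i] iJ jJ by (simp add: abs_minus_commute)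
        qed
        have "cmod (z i - z j) \<ge> \<bar>Im (z i - z j)\<bar>" by (rule abs_Im_le_cmod)
        also have "\<bar>Im (z i - z j)\<bar> = T * \<bar>y i - y j\<bar>"
          using \<sigma> T by (simp add: z_def abs_mult right_diff_distrib[symmetric])
        finally have "T * \<bar>y i - y j\<bar> \<le> cmod (z i - z j)" .
        moreover have "T * (1 / N) \<le> T * \<bar>y i - y j\<bar>" using k T by (intro mult_left_mono) auto
        moreover have "1/2 \<le> T * (1 / N)" using NT T N0 by (simp add: field_simps)
        ultimately show ?thesis by linarith
      qed
    qed
    moreover have eq: "(1/4 * x / (2 * (BK^2 + 1)))^2 = x^2 / (64 * (BK^2 + 1)^2)" for x :: real
    proof -
      have "1/4 * x / (2 * (BK^2 + 1)) = x / (8 * (BK^2 + 1))" by simp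
      moreover have "(8 * (BK^2 + 1))^2 = 64 * (BK^2 + 1)^2" by (simp only: power_mult_distrib) simp
      ultimately show ?thesis by (simp only: power_divide)
    qed
    ultimately have "(\<Sum>j\<in>J. (cmod (deriv \<phi> (z j)))^2 / (64 * (BK^2 + 1)^2)) \<le> (R + 1)^2"
      by (simp only: eq)
    then have "(\<Sum>j\<in>J. (cmod (deriv \<phi> (z j)))^2) / (64 * (BK^2 + 1)^2) \<le> (R + 1)^2"
      by (simp add: sum_divide_distrib)
    moreover have pos: "64 * (BK^2 + 1)^2 > 0"
    proof -
      have "BK^2 + 1 > 0" by (smt (verit) zero_le_power2)
      then show ?thesis by simp
    qed
    ultimately have "(\<Sum>j\<in>J. (cmod (deriv \<phi> (z j)))^2) \<le> (R + 1)^2 * (64 * (BK^2 + 1)^2)"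
      by (simp only: divide_le_eq)
    then show ?thesis by (simp add: h_def z_def mult.commute mult.left_commute)
  qed
  have split: "{..<N} = {j. j < N \<and> even j} \<union> {j. j < N \<and> odd j}" by auto
  have "(\<Sum>j<N. h (y j)) = (\<Sum>j\<in>{j. j < N \<and> even j}. h (y j)) + (\<Sum>j\<in>{j. j < N \<and> odd j}. h (y j))"
    unfolding split by (rule sum.union_disjoint) auto
  also have "\<dots> \<le> 64 * (BK^2 + 1)^2 * (R + 1)^2 + 64 * (BK^2 + 1)^2 * (R + 1)^2"
  proof (intro add_mono cls)
    show "\<And>i j. i \<in> {j. j < N \<and> even j} \<Longrightarrow> j \<in> {j. j < N \<and> even j} \<Longrightarrow> i < j \<Longrightarrow> i + 2 \<le> j"
      by auto presburger
    show "\<And>i j. i \<in> {j. j < N \<and> odd j} \<Longrightarrow> j \<in> {j. j < N \<and> odd j} \<Longrightarrow> i < j \<Longrightarrow> i + 2 \<le> j"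
      by auto presburger
  qed auto
  also have "\<dots> = 128 * (BK^2 + 1)^2 * (R + 1)^2" by simp
  finally have S: "(\<Sum>j<N. h (y j)) \<le> 128 * (BK^2 + 1)^2 * (R + 1)^2" .
  have "integral {1..2} h \<le> (\<Sum>j<N. h (y j)) / N" by (rule int)
  also have "\<dots> \<le> 128 * (BK^2 + 1)^2 * (R + 1)^2 / N" using S N0 by (simp add: divide_right_mono)
  also have "\<dots> \<le> 128 * (BK^2 + 1)^2 * (R + 1)^2 / T" using NT T by (intro divide_left_mono) auto
  finally show ?thesis by (simp add: h_def)
qed


lemma Iset_split:
  fixes f :: "real \<Rightarrow> real"
  assumes cont: "continuous_on Iset f"
  shows "f integrable_on Iset" "integral Iset f = integral {-2..-1} f + integral {1..2} f"
proof -
  have c1: "continuous_on {-2..-1} f" using cont by (rule continuous_on_subset) (auto simp: Iset_def)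
  have c2: "continuous_on {1..2} f" using cont by (rule continuous_on_subset) (auto simp: Iset_def)
  have i1: "f integrable_on {-2..-1}" using c1 by (rule integrable_continuous_real)
  have i2: "f integrable_on {1..2}" using c2 by (rule integrable_continuous_real)
  have neg: "negligible ({-2..-1} \<inter> {1..2::real})" by simp
  show "f integrable_on Iset" unfolding Iset_def using integrable_Un[OF neg i1 i2] .
  show "integral Iset f = integral {-2..-1} f + integral {1..2} f"
    unfolding Iset_def using integral_Un[OF i1 i2 neg] .
qed

lemma Iset_bounds:
  fixes f :: "real \<Rightarrow> real"
  assumes cont: "continuous_on Iset f" and b: "\<And>y. y \<in> Iset \<Longrightarrow> a \<le> f y \<and> f y \<le> b"
  shows "2 * a \<le> integral Iset f" "integral Iset f \<le> 2 * b"
proof -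
  have c1: "continuous_on {-2..-1} f" using cont by (rule continuous_on_subset) (auto simp: Iset_def)
  have c2: "continuous_on {1..2} f" using cont by (rule continuous_on_subset) (auto simp: Iset_def)
  have i1: "f integrable_on {-2..-1}" using c1 by (rule integrable_continuous_real)
  have i2: "f integrable_on {1..2}" using c2 by (rule integrable_continuous_real)
  have "integral {-2..-1::real} (\<lambda>_. a) \<le> integral {-2..-1} f"
    by (rule integral_le) (use i1 b in \<open>auto simp: Iset_def\<close>)
  moreover have "integral {1..2::real} (\<lambda>_. a) \<le> integral {1..2} f"
    by (rule integral_le) (use i2 b in \<open>auto simp: Iset_def\<close>)
  moreover have "integral {-2..-1} f \<le> integral {-2..-1::real} (\<lambda>_. b)"
    by (rule integral_le) (use i1 b in \<open>auto simp: Iset_def\<close>)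
  moreover have "integral {1..2} f \<le> integral {1..2::real} (\<lambda>_. b)"
    by (rule integral_le) (use i2 b in \<open>auto simp: Iset_def\<close>)
  ultimately show "2 * a \<le> integral Iset f" "integral Iset f \<le> 2 * b"
    using Iset_split(2)[OF cont] by simp_all
qed

lemma Iset_powr_bounds:
  fixes f :: "real \<Rightarrow> real"
  assumes cont: "continuous_on Iset f" and pos: "\<And>y. y \<in> Iset \<Longrightarrow> f y > 0"
    and L: "\<And>y. y \<in> Iset \<Longrightarrow> \<bar>ln (f y)\<bar> \<le> \<Lambda>"
  shows "continuous_on Iset (\<lambda>y. f y powr t)"
    "2 * exp (- \<bar>t\<bar> * \<Lambda>) \<le> integral Iset (\<lambda>y. f y powr t)"
    "integral Iset (\<lambda>y. f y powr t) \<le> 2 * exp (\<bar>t\<bar> * \<Lambda>)"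
    "\<bar>ln (integral Iset (\<lambda>y. f y powr t)) - ln 2\<bar> \<le> \<bar>t\<bar> * \<Lambda>"
proof -
  have nz: "\<forall>y\<in>Iset. f y \<noteq> 0" using pos by (metis less_irrefl)
  show cp: "continuous_on Iset (\<lambda>y. f y powr t)"
    by (rule continuous_on_powr[OF cont continuous_on_const nz])
  have b: "exp (- \<bar>t\<bar> * \<Lambda>) \<le> f y powr t \<and> f y powr t \<le> exp (\<bar>t\<bar> * \<Lambda>)" if "y \<in> Iset" for y
  proof -
    have "\<bar>t * ln (f y)\<bar> \<le> \<bar>t\<bar> * \<Lambda>" using L[OF that] by (simp add: abs_mult mult_left_mono)
    then have "- \<bar>t\<bar> * \<Lambda> \<le> t * ln (f y)" "t * ln (f y) \<le> \<bar>t\<bar> * \<Lambda>" by linarith+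
    then show ?thesis using pos[OF that] by (simp add: powr_def)
  qed
  show lo: "2 * exp (- \<bar>t\<bar> * \<Lambda>) \<le> integral Iset (\<lambda>y. f y powr t)"
    using Iset_bounds(1)[OF cp b] by simp
  show hi: "integral Iset (\<lambda>y. f y powr t) \<le> 2 * exp (\<bar>t\<bar> * \<Lambda>)"
    using Iset_bounds(2)[OF cp b] by simp
  have e: "exp (- \<bar>t\<bar> * \<Lambda>) > 0" "exp (- (\<bar>t\<bar> * \<Lambda>)) > 0" by simp_all
  have ipos: "integral Iset (\<lambda>y. f y powr t) > 0" using lo e by linarith
  have "ln (2 * exp (- \<bar>t\<bar> * \<Lambda>)) \<le> ln (integral Iset (\<lambda>y. f y powr t))"
    using lo ipos by (subst ln_le_cancel_iff) auto
  moreover have "ln (integral Iset (\<lambda>y. f y powr t)) \<le> ln (2 * exp (\<bar>t\<bar> * \<Lambda>))"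
    using hi ipos by (subst ln_le_cancel_iff) auto
  ultimately show "\<bar>ln (integral Iset (\<lambda>y. f y powr t)) - ln 2\<bar> \<le> \<bar>t\<bar> * \<Lambda>"
    by (simp add: ln_mult)
qed

lemma Iset_logconvex:
  fixes f :: "real \<Rightarrow> real"
  assumes cont: "continuous_on Iset f" and pos: "\<And>y. y \<in> Iset \<Longrightarrow> f y > 0"
    and L: "\<And>y. y \<in> Iset \<Longrightarrow> \<bar>ln (f y)\<bar> \<le> \<Lambda>"
    and u: "u \<ge> 0" and v: "v \<ge> 0" and uv: "u + v = 1"
  shows "ln (integral Iset (\<lambda>y. f y powr (u * a + v * b)))
          \<le> u * ln (integral Iset (\<lambda>y. f y powr a)) + v * ln (integral Iset (\<lambda>y. f y powr b))"
proof -
  define A where "A = integral Iset (\<lambda>y. f y powr a)"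
  define B where "B = integral Iset (\<lambda>y. f y powr b)"
  have Apos: "A > 0" unfolding A_def using Iset_powr_bounds(2)[OF cont pos L, of a] by (smt (verit) exp_gt_zero)
  have Bpos: "B > 0" unfolding B_def using Iset_powr_bounds(2)[OF cont pos L, of b] by (smt (verit) exp_gt_zero)
  have ca: "continuous_on Iset (\<lambda>y. f y powr a)" by (rule Iset_powr_bounds(1)[OF cont pos L])
  have cb: "continuous_on Iset (\<lambda>y. f y powr b)" by (rule Iset_powr_bounds(1)[OF cont pos L])
  have cm: "continuous_on Iset (\<lambda>y. f y powr (u * a + v * b))" by (rule Iset_powr_bounds(1)[OF cont pos L])
  have pw: "f y powr (u * a + v * b) \<le> A powr u * B powr v * (u * (f y powr a / A) + v * (f y powr b / B))"
    if "y \<in> Iset" for y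
  proof -
    have fy: "f y > 0" using pos[OF that] .
    have "f y powr (u * a + v * b) = (f y powr a) powr u * (f y powr b) powr v"
      using fy by (simp add: powr_powr powr_add mult.commute)
    also have "\<dots> = A powr u * B powr v * ((f y powr a / A) powr u * (f y powr b / B) powr v)"
      using Apos Bpos fy by (simp add: powr_divide)
    also have "\<dots> \<le> A powr u * B powr v * (u * (f y powr a / A) + v * (f y powr b / B))"
      using Apos Bpos fy u v uv by (intro mult_left_mono Youngs_inequality_0) auto
    finally show ?thesis .
  qed
  have ia: "(\<lambda>y. f y powr a) integrable_on Iset" by (rule Iset_split(1)[OF ca])
  have ib: "(\<lambda>y. f y powr b) integrable_on Iset" by (rule Iset_split(1)[OF cb])
  have im: "(\<lambda>y. f y powr (u * a + v * b)) integrable_on Iset" by (rule Iset_split(1)[OF cm])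
  have irhs: "(\<lambda>y. A powr u * B powr v * (u * (f y powr a / A) + v * (f y powr b / B))) integrable_on Iset"
  proof (rule Iset_split(1))
    show "continuous_on Iset (\<lambda>y. A powr u * B powr v * (u * (f y powr a / A) + v * (f y powr b / B)))"
      by (intro continuous_on_mult_left continuous_on_add continuous_on_divide ca cb continuous_on_const)
        (use Apos Bpos in auto)
  qed
  have "integral Iset (\<lambda>y. f y powr (u * a + v * b))
        \<le> integral Iset (\<lambda>y. A powr u * B powr v * (u * (f y powr a / A) + v * (f y powr b / B)))"
    by (rule integral_le[OF im irhs pw])
  also have "\<dots> = A powr u * B powr v * (u * (A / A) + v * (B / B))"
  proof -
    have "integral Iset (\<lambda>y. u * (f y powr a / A) + v * (f y powr b / B))
          = u * (integral Iset (\<lambda>y. f y powr a) / A) + v * (integral Iset (\<lambda>y. f y powr b) / B)"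
    proof -
      have j1: "(\<lambda>y. u * (f y powr a / A)) integrable_on Iset"
        by (rule Iset_split(1)) (intro continuous_on_mult_left continuous_on_divide ca continuous_on_const, use Apos in auto)
      have j2: "(\<lambda>y. v * (f y powr b / B)) integrable_on Iset"
        by (rule Iset_split(1)) (intro continuous_on_mult_left continuous_on_divide cb continuous_on_const, use Bpos in auto)
      show ?thesis using integral_add[OF j1 j2] by (simp add: integral_mult_right integral_divide)
    qed
    then show ?thesis by (simp add: A_def B_def)
  qed
  also have "\<dots> = A powr u * B powr v" using Apos Bpos uv by simp
  finally have le: "integral Iset (\<lambda>y. f y powr (u * a + v * b)) \<le> A powr u * B powr v" .
  have mpos: "integral Iset (\<lambda>y. f y powr (u * a + v * b)) > 0"
    using Iset_powr_bounds(2)[OF cont pos L, of "u * a + v * b"] by (smt (verit) exp_gt_zero)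
  have "ln (integral Iset (\<lambda>y. f y powr (u * a + v * b))) \<le> ln (A powr u * B powr v)"
    using le mpos by (subst ln_le_cancel_iff) auto
  also have "\<dots> = u * ln A + v * ln B" using Apos Bpos by (simp add: ln_mult ln_powr)
  finally show ?thesis by (simp add: A_def B_def)
qed


lemma deriv_phiT:
  fixes \<phi> :: "complex \<Rightarrow> complex"
  assumes holo: "\<phi> holomorphic_on halfplane" and T: "T > 0"
  shows "deriv (phiT \<phi> T) (Complex (1/T) y)
           = of_real T * deriv \<phi> (Complex 1 (T*y)) / of_real (cmod (\<phi> (of_real T)))"
proof -
  define w where "w = Complex 1 (T*y)"
  have w: "of_real T * Complex (1/T) y = w" using T by (simp add: w_def complex_eq_iff)
  have wH: "w \<in> halfplane" by (simp add: w_def halfplane_def)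
  have d1: "(\<phi> has_field_derivative deriv \<phi> w) (at w)"
    by (rule holomorphic_derivI[OF holo open_halfplane wH])
  have d2: "((\<lambda>\<xi>. of_real T * \<xi>) has_field_derivative of_real T) (at (Complex (1/T) y))"
    by (auto intro!: derivative_eq_intros)
  have "((\<lambda>\<xi>. \<phi> (of_real T * \<xi>)) has_field_derivative deriv \<phi> w * of_real T) (at (Complex (1/T) y))"
    using DERIV_chain2[of \<phi> "deriv \<phi> w" "\<lambda>\<xi>. of_real T * \<xi>" "Complex (1/T) y"] d1 d2 w by simp
  then have "(phiT \<phi> T has_field_derivative deriv \<phi> w * of_real T / of_real (cmod (\<phi> (of_real T))))
               (at (Complex (1/T) y))"
    unfolding phiT_def by (rule DERIV_cdivide)
  then show ?thesis unfolding w_def by (simp add: DERIV_imp_deriv mult.commute)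
qed

lemma norm_deriv_phiT:
  fixes \<phi> :: "complex \<Rightarrow> complex"
  assumes holo: "\<phi> holomorphic_on halfplane" and T: "T > 0"
  shows "cmod (deriv (phiT \<phi> T) (Complex (1/T) y))
           = T * cmod (deriv \<phi> (Complex 1 (T*y))) / cmod (\<phi> (of_real T))"
  using T by (simp add: deriv_phiT[OF holo T] norm_mult norm_divide)

lemma beta_phiT:
  "T > 0 \<Longrightarrow> beta (phiT \<phi> T) (1/T) t
     = ln (integral Iset (\<lambda>y. cmod (deriv (phiT \<phi> T) (Complex (1/T) y)) powr t)) / ln T"
  by (simp add: beta_def)

locale PS =
  fixes \<phi> :: "complex \<Rightarrow> complex" and \<gamma> M T0 :: real
  assumes gam: "0 < \<gamma>"
    and holo: "\<phi> holomorphic_on halfplane"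
    and inj: "inj_on \<phi> halfplane"
    and big: "\<And>\<xi>. \<xi> \<in> halfplane \<Longrightarrow> cmod (\<phi> \<xi>) > exp \<gamma>"
    and open_img: "open (\<phi> ` halfplane)"
    and dbl: "\<And>T \<xi> \<xi>'. T \<ge> T0 \<Longrightarrow> \<xi> \<in> QT T - QT (T/8) \<Longrightarrow> \<xi>' \<in> QT T - QT (T/8)
        \<Longrightarrow> cmod (\<phi> \<xi>) \<le> M * cmod (\<phi> \<xi>')"
begin

lemma nz: "0 \<notin> \<phi> ` halfplane"
  using big by fastforce

lemma phi_ge1: "\<xi> \<in> halfplane \<Longrightarrow> cmod (\<phi> \<xi>) \<ge> 1"
  using big[of \<xi>] gam by (smt (verit) one_le_exp_iff)

lemma mem1: "T > 0 \<Longrightarrow> of_real T \<in> QT T - QT (T/8)"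
  by (simp add: QT_def)

lemma mem2: "T \<ge> 1 \<Longrightarrow> T \<le> \<bar>s\<bar> \<Longrightarrow> \<bar>s\<bar> \<le> 2 * T \<Longrightarrow> Complex 1 s \<in> QT T - QT (T/8)"
  by (simp add: QT_def)

lemma mem3: "T \<ge> 2 \<Longrightarrow> 0 < Re \<zeta> \<Longrightarrow> Re \<zeta> < 2 \<Longrightarrow> T - 1 \<le> \<bar>Im \<zeta>\<bar> \<Longrightarrow> \<bar>Im \<zeta>\<bar> \<le> 2 * T + 1
    \<Longrightarrow> \<zeta> \<in> QT T - QT (T/8)"
  by (simp add: QT_def)

lemma M1: "M \<ge> 1"
proof -
  define T where "T = max T0 1"
  have "T \<ge> T0" "T > 0" by (auto simp: T_def)
  then have "cmod (\<phi> (of_real T)) \<le> M * cmod (\<phi> (of_real T))" using dbl mem1 by blast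
  moreover have "cmod (\<phi> (of_real T)) \<ge> 1" using \<open>T > 0\<close> by (intro phi_ge1) (simp add: halfplane_def)
  ultimately show ?thesis by (smt (verit) mult_le_cancel_right1)
qed

lemma eps0: obtains \<epsilon>0 where "\<epsilon>0 > 0" "Pb \<phi> 1 \<epsilon>0"
proof -
  have "\<phi> 1 \<in> \<phi> ` halfplane" by (simp add: halfplane_def)
  then obtain r where r: "r > 0" "ball (\<phi> 1) r \<subseteq> \<phi> ` halfplane" using open_img open_contains_ball by blast
  have p: "cmod (\<phi> 1) \<ge> 1" by (rule phi_ge1) (simp add: halfplane_def)
  show ?thesis
  proof
    show "r / cmod (\<phi> 1) > 0" using r p by (intro divide_pos_pos) auto
    show "Pb \<phi> 1 (r / cmod (\<phi> 1))" unfolding Pb_def using r p by simp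
  qed
qed

end


context PS begin

lemma ptwise:
  obtains K T1 where "T1 \<ge> 3" "K \<ge> 0"
    "\<And>T y. T \<ge> T1 \<Longrightarrow> y \<in> Iset \<Longrightarrow> cmod (deriv (phiT \<phi> T) (Complex (1/T) y)) > 0 \<and>
        \<bar>ln (cmod (deriv (phiT \<phi> T) (Complex (1/T) y)))\<bar> \<le> K * ln T"
proof -
  obtain \<epsilon>0 where e0: "\<epsilon>0 > 0" and P1: "Pb \<phi> 1 \<epsilon>0" by (rule eps0)
  obtain c \<kappa> where c: "c > 0" and \<kappa>: "\<kappa> \<ge> 0"
    and Pc: "\<And>s. \<bar>s\<bar> \<ge> 1 \<Longrightarrow> Pb \<phi> (Complex 1 s) (c * \<bar>s\<bar> powr (- \<kappa>))"
    using Pb_line_powr[OF holo inj nz P1 e0] by metis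
  define T1 where "T1 = max T0 3"
  define K where "K = 1 + \<kappa> + \<bar>ln (2 * BK^2 * M)\<bar> + \<bar>ln c\<bar> + \<kappa> * ln 2 + \<bar>ln (4 * M)\<bar>"
  have M1: "M \<ge> 1" by (rule M1)
  have BK1: "BK \<ge> 1" by (rule BK_ge1)
  show ?thesis
  proof
    show "T1 \<ge> 3" by (simp add: T1_def)
    show "K \<ge> 0" using \<kappa> by (simp add: K_def)
    fix T y assume T: "T \<ge> T1" and y: "y \<in> Iset"
    have T3: "T \<ge> 3" and TT0: "T \<ge> T0" using T by (auto simp: T1_def)
    have Tpos: "T > 0" using T3 by simp
    have lnT: "ln T \<ge> 1"
    proof -
      have "exp 1 \<le> (3::real)" using exp_le by simp
      then have "exp 1 \<le> T" using T3 by simp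
      then show ?thesis by (metis Tpos exp_le_cancel_iff exp_ln)
    qed
    have y12: "1 \<le> \<bar>y\<bar>" "\<bar>y\<bar> \<le> 2" using y by (auto simp: Iset_def)
    define s where "s = T * y"
    have s: "T \<le> \<bar>s\<bar>" "\<bar>s\<bar> \<le> 2 * T" using y12 Tpos by (auto simp: s_def abs_mult)
    have s1: "\<bar>s\<bar> \<ge> 1" using s T3 by simp
    define \<Phi> where "\<Phi> = cmod (\<phi> (of_real T))"
    define P where "P = cmod (\<phi> (Complex 1 s))"
    define D where "D = cmod (deriv \<phi> (Complex 1 s))"
    have \<Phi>1: "\<Phi> \<ge> 1" unfolding \<Phi>_def using Tpos by (intro phi_ge1) (simp add: halfplane_def)
    have P1': "P \<ge> 1" unfolding P_def by (intro phi_ge1) (simp add: halfplane_def)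
    have m1: "of_real T \<in> QT T - QT (T/8)" using Tpos by (rule mem1)
    have m2: "Complex 1 s \<in> QT T - QT (T/8)" using T3 s by (intro mem2) auto
    have d1: "\<Phi> \<le> M * P" unfolding \<Phi>_def P_def by (rule dbl[OF TT0 m1 m2])
    have d2: "P \<le> M * \<Phi>" unfolding \<Phi>_def P_def by (rule dbl[OF TT0 m2 m1])
    have up: "D \<le> 2 * BK^2 * P"
      using deriv_upper[OF holo inj nz, of "Complex 1 s"] by (simp add: D_def P_def)
    define d where "d = c * \<bar>s\<bar> powr (- \<kappa>) * P"
    have dpos: "d > 0" using c P1' s1 by (simp add: d_def)
    have lo: "d / 4 \<le> D"
      using deriv_lower_inv[OF holo inj, of "Complex 1 s" d] dpos Pc[OF s1]
      by (simp add: Pb_def d_def P_def D_def)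
    have g: "cmod (deriv (phiT \<phi> T) (Complex (1/T) y)) = T * D / \<Phi>"
      unfolding norm_deriv_phiT[OF holo Tpos] D_def \<Phi>_def s_def ..
    define a where "a = T * c * (2 * T) powr (- \<kappa>) / (4 * M)"
    define b where "b = 2 * BK^2 * M * T"
    have apos: "a > 0" using Tpos c M1 by (simp add: a_def)
    have ga: "a \<le> T * D / \<Phi>"
    proof -
      have "\<bar>s\<bar> powr (- \<kappa>) \<ge> (2 * T) powr (- \<kappa>)"
        using s \<kappa> s1 by (intro powr_mono2') auto
      then have "c * (2 * T) powr (- \<kappa>) * P \<le> d" using c P1' by (simp add: d_def)
      then have "c * (2 * T) powr (- \<kappa>) * P / 4 \<le> D" using lo by simp
      moreover have "\<Phi> / M \<le> P" using d1 M1 by (simp add: divide_le_eq mult.commute)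
      moreover have q: "c * (2 * T) powr (- \<kappa>) \<ge> 0" using c by simp
      ultimately have "c * (2 * T) powr (- \<kappa>) * (\<Phi> / M) \<le> c * (2 * T) powr (- \<kappa>) * P"
        by (intro mult_left_mono) auto
      then have "c * (2 * T) powr (- \<kappa>) * (\<Phi> / M) / 4 \<le> c * (2 * T) powr (- \<kappa>) * P / 4" by simp
      then have "c * (2 * T) powr (- \<kappa>) * (\<Phi> / M) / 4 \<le> D"
        using \<open>c * (2 * T) powr (- \<kappa>) * P / 4 \<le> D\<close> by linarith
      then have "T * (c * (2 * T) powr (- \<kappa>) * (\<Phi> / M) / 4) / \<Phi> \<le> T * D / \<Phi>"
        using Tpos \<Phi>1 by (intro divide_right_mono mult_left_mono) auto
      moreover have "T * (c * (2 * T) powr (- \<kappa>) * (\<Phi> / M) / 4) / \<Phi> = a"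
        using \<Phi>1 M1 by (simp add: a_def field_simps)
      ultimately show ?thesis by simp
    qed
    have gb: "T * D / \<Phi> \<le> b"
    proof -
      have "2 * BK^2 * P \<le> 2 * BK^2 * (M * \<Phi>)" using d2 by (intro mult_left_mono) auto
      then have "D \<le> 2 * BK^2 * (M * \<Phi>)" using up by linarith
      then have "T * D / \<Phi> \<le> T * (2 * BK^2 * (M * \<Phi>)) / \<Phi>"
        using Tpos \<Phi>1 by (intro divide_right_mono mult_left_mono) auto
      also have "\<dots> = b" using \<Phi>1 by (simp add: b_def field_simps)
      finally show ?thesis .
    qed
    have gpos: "T * D / \<Phi> > 0" using ga apos by linarith
    have la: "ln a \<le> ln (T * D / \<Phi>)" using ga apos by simp
    have lb: "ln (T * D / \<Phi>) \<le> ln b" using gb gpos by simp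
    have lnb: "ln b = ln (2 * BK^2 * M) + ln T"
      using Tpos M1 BK1 by (simp add: b_def ln_mult)
    have lna: "ln a = ln T + ln c - \<kappa> * (ln 2 + ln T) - ln (4 * M)"
      using Tpos M1 c by (simp add: a_def ln_mult ln_div ln_powr)
    define W where "W = \<bar>ln c\<bar> + \<kappa> * ln 2 + \<bar>ln (4 * M)\<bar>"
    define E where "E = \<bar>ln (2 * BK^2 * M)\<bar>"
    have W0: "W \<ge> 0" using \<kappa> by (simp add: W_def)
    have KL: "K * ln T = ln T + \<kappa> * ln T + E * ln T + W * ln T"
      by (simp add: K_def W_def E_def algebra_simps)
    have lT0: "ln T \<ge> 0" using lnT by simp
    have EL: "E * 1 \<le> E * ln T" using lnT by (intro mult_left_mono) (auto simp: E_def)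
    have WL: "W * 1 \<le> W * ln T" using lnT W0 by (intro mult_left_mono) auto
    have kL: "\<kappa> * ln T \<ge> 0" using \<kappa> lT0 by simp
    have Ege: "ln (2 * BK^2 * M) \<le> E" by (simp add: E_def)
    have c1: "- \<bar>ln c\<bar> \<le> ln c" "ln (4 * M) \<le> \<bar>ln (4 * M)\<bar>" by simp_all
    have k2: "\<kappa> * (ln 2 + ln T) = \<kappa> * ln 2 + \<kappa> * ln T" by (simp add: algebra_simps)
    have "ln (T * D / \<Phi>) \<le> K * ln T"
      using lb lnb KL EL WL kL Ege W0 by simp
    moreover have "- (K * ln T) \<le> ln (T * D / \<Phi>)"
    proof -
      have E0: "E \<ge> 0" by (simp add: E_def)
      have EL0: "E * ln T \<ge> 0" using E0 lT0 by simp
      show ?thesis using la lna KL WL kL W0 c1 k2 W_def EL0 lT0 by linarith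
    qed
    ultimately show "cmod (deriv (phiT \<phi> T) (Complex (1/T) y)) > 0 \<and>
        \<bar>ln (cmod (deriv (phiT \<phi> T) (Complex (1/T) y)))\<bar> \<le> K * ln T"
      using gpos g by auto
  qed
qed

end


context PS begin

lemma int2:
  obtains C T2 where "C > 0" "T2 \<ge> 3"
    "\<And>T. T \<ge> T2 \<Longrightarrow> integral Iset (\<lambda>y. cmod (deriv (phiT \<phi> T) (Complex (1/T) y)) powr 2) \<le> C * T"
proof -
  define C where "C = 256 * (BK^2 + 1)^2 * (M + 1)^2"
  define T2 where "T2 = max T0 3"
  have M1: "M \<ge> 1" by (rule M1)
  show ?thesis
  proof
    have b: "BK^2 + 1 > 0" by (smt (verit) zero_le_power2)
    show "C > 0" using M1 b by (simp add: C_def)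
    show "T2 \<ge> 3" by (simp add: T2_def)
    fix T assume T: "T \<ge> T2"
    have T3: "T \<ge> 3" and TT0: "T \<ge> T0" using T by (auto simp: T2_def)
    have Tpos: "T > 0" using T3 by simp
    define \<Phi> where "\<Phi> = cmod (\<phi> (of_real T))"
    have \<Phi>1: "\<Phi> \<ge> 1" unfolding \<Phi>_def using Tpos by (intro phi_ge1) (simp add: halfplane_def)
    define h1 where "h1 = (\<lambda>y. cmod (deriv \<phi> (Complex 1 (T * y)))^2)"
    have ch1: "continuous_on Iset h1" unfolding h1_def
      by (intro continuous_intros cont_deriv_line[OF holo])
    define R where "R = M * \<Phi>"
    have R0: "R \<ge> 0" using M1 \<Phi>1 by (simp add: R_def)
    have bnd: "cmod (\<phi> \<zeta>) \<le> R" if "0 < Re \<zeta>" "Re \<zeta> < 2" "T - 1 \<le> \<bar>Im \<zeta>\<bar>" "\<bar>Im \<zeta>\<bar> \<le> 2 * T + 1" for \<zeta>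
    proof -
      have "\<zeta> \<in> QT T - QT (T/8)" using T3 that by (intro mem3) auto
      then show ?thesis unfolding R_def \<Phi>_def using dbl[OF TT0 _ mem1[OF Tpos]] by blast
    qed
    define Q where "Q = 128 * (BK^2 + 1)^2 * (R + 1)^2 / T"
    have A1: "integral {1..2} h1 \<le> Q"
      using area_half[OF holo inj, where T=T and \<sigma>=1 and R=R, OF _ _ R0 bnd] T3 by (simp add: h1_def Q_def)
    have A2: "integral {1..2} (\<lambda>y. h1 (- y)) \<le> Q"
    proof -
      have "integral {1..2} (\<lambda>y. cmod (deriv \<phi> (Complex 1 (- 1 * T * y)))^2) \<le> Q"
        using area_half[OF holo inj, where T=T and \<sigma>="-1" and R=R, OF _ _ R0 bnd] T3 by (simp add: Q_def)
      moreover have "(\<lambda>y. h1 (- y)) = (\<lambda>y. cmod (deriv \<phi> (Complex 1 (- 1 * T * y)))^2)"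
        by (simp add: h1_def)
      ultimately show ?thesis by simp
    qed
    have "integral {-2..-1} h1 = integral {1..2} (\<lambda>y. h1 (- y))"
      using Henstock_Kurzweil_Integration.integral_reflect_real[of 2 1 "\<lambda>y. h1 (- y)"] by simp
    then have I1: "integral Iset h1 \<le> 2 * Q" using Iset_split(2)[OF ch1] A1 A2 by simp
    have eq: "(\<lambda>y. cmod (deriv (phiT \<phi> T) (Complex (1/T) y)) powr 2) = (\<lambda>y. (T / \<Phi>)^2 * h1 y)"
    proof
      fix y
      have "cmod (deriv (phiT \<phi> T) (Complex (1/T) y)) powr 2 = (cmod (deriv (phiT \<phi> T) (Complex (1/T) y)))^2"
        by simp
      also have "\<dots> = (T / \<Phi>)^2 * h1 y"
        unfolding norm_deriv_phiT[OF holo Tpos] h1_def \<Phi>_def by (simp add: power_divide power_mult_distrib)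
      finally show "cmod (deriv (phiT \<phi> T) (Complex (1/T) y)) powr 2 = (T / \<Phi>)^2 * h1 y" .
    qed
    have "integral Iset (\<lambda>y. cmod (deriv (phiT \<phi> T) (Complex (1/T) y)) powr 2) = (T / \<Phi>)^2 * integral Iset h1"
      unfolding eq by simp
    also have "\<dots> \<le> (T / \<Phi>)^2 * (2 * Q)" using I1 by (intro mult_left_mono) auto
    also have "\<dots> = 256 * (BK^2 + 1)^2 * T * ((M * \<Phi> + 1) / \<Phi>)^2"
      using Tpos \<Phi>1 by (simp add: Q_def R_def power_divide field_simps power2_eq_square)
    also have "\<dots> \<le> 256 * (BK^2 + 1)^2 * T * (M + 1)^2"
    proof -
      have "(M * \<Phi> + 1) / \<Phi> \<le> M + 1" using \<Phi>1 by (simp add: divide_le_eq algebra_simps)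
      moreover have "(M * \<Phi> + 1) / \<Phi> \<ge> 0" using \<Phi>1 M1 by simp
      ultimately have "((M * \<Phi> + 1) / \<Phi>)^2 \<le> (M + 1)^2" by (intro power_mono)
      then show ?thesis using Tpos by (intro mult_left_mono) (auto simp: add_pos_nonneg)
    qed
    also have "\<dots> = C * T" by (simp add: C_def)
    finally show "integral Iset (\<lambda>y. cmod (deriv (phiT \<phi> T) (Complex (1/T) y)) powr 2) \<le> C * T" .
  qed
qed

end


context PS begin

lemma cont_g: "T > 0 \<Longrightarrow> continuous_on Iset (\<lambda>y. cmod (deriv (phiT \<phi> T) (Complex (1/T) y)))"
proof -
  assume T: "T > 0"
  have "cmod (\<phi> (of_real T)) \<ge> 1" using T by (intro phi_ge1) (simp add: halfplane_def)
  then have nz: "\<phi> (of_real T) \<noteq> 0" by (metis norm_zero not_one_le_zero)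
  show ?thesis unfolding norm_deriv_phiT[OF holo T]
    by (intro continuous_intros cont_deriv_line[OF holo]) (use nz in auto)
qed

definition FF :: "real \<Rightarrow> real \<Rightarrow> real" where
  "FF T t = beta (phiT \<phi> T) (1/T) t"

lemma FF_facts:
  obtains T1 K where "T1 \<ge> 3" "K \<ge> 0"
    "\<And>T t. T \<ge> T1 \<Longrightarrow> \<bar>FF T t - ln 2 / ln T\<bar> \<le> \<bar>t\<bar> * K"
    "\<And>T. T \<ge> T1 \<Longrightarrow> FF T 0 = ln 2 / ln T"
    "\<And>T a b u v. T \<ge> T1 \<Longrightarrow> u \<ge> 0 \<Longrightarrow> v \<ge> 0 \<Longrightarrow> u + v = 1 \<Longrightarrow>
        FF T (u * a + v * b) \<le> u * FF T a + v * FF T b"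
proof -
  obtain T1 K where T1: "T1 \<ge> 3" and K: "K \<ge> 0"
    and pw: "\<And>T y. T \<ge> T1 \<Longrightarrow> y \<in> Iset \<Longrightarrow> cmod (deriv (phiT \<phi> T) (Complex (1/T) y)) > 0 \<and>
        \<bar>ln (cmod (deriv (phiT \<phi> T) (Complex (1/T) y)))\<bar> \<le> K * ln T"
    by (rule ptwise) blast
  show ?thesis
  proof
    show "T1 \<ge> 3" by (rule T1)
    show "K \<ge> 0" by (rule K)
  next
    fix T t assume T: "T \<ge> T1"
    have Tpos: "T > 0" using T T1 by simp
    have lnT: "ln T > 0" using T T1 by simp
    have b: "\<bar>ln (integral Iset (\<lambda>y. cmod (deriv (phiT \<phi> T) (Complex (1/T) y)) powr t)) - ln 2\<bar> \<le> \<bar>t\<bar> * (K * ln T)"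
      by (rule Iset_powr_bounds(4)[OF cont_g[OF Tpos]]) (use pw[OF T] in auto)
    have "FF T t - ln 2 / ln T = (ln (integral Iset (\<lambda>y. cmod (deriv (phiT \<phi> T) (Complex (1/T) y)) powr t)) - ln 2) / ln T"
      unfolding FF_def beta_phiT[OF Tpos] by (simp add: diff_divide_distrib)
    then have "\<bar>FF T t - ln 2 / ln T\<bar> = \<bar>ln (integral Iset (\<lambda>y. cmod (deriv (phiT \<phi> T) (Complex (1/T) y)) powr t)) - ln 2\<bar> / ln T"
      using lnT by simp
    also have "\<dots> \<le> \<bar>t\<bar> * (K * ln T) / ln T" using b lnT by (intro divide_right_mono) auto
    also have "\<dots> = \<bar>t\<bar> * K" using lnT by simp
    finally show "\<bar>FF T t - ln 2 / ln T\<bar> \<le> \<bar>t\<bar> * K" .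
  next
    fix T assume T: "T \<ge> T1"
    have Tpos: "T > 0" using T T1 by simp
    have lo: "2 * exp (- \<bar>0\<bar> * (K * ln T)) \<le> integral Iset (\<lambda>y. cmod (deriv (phiT \<phi> T) (Complex (1/T) y)) powr 0)"
      by (rule Iset_powr_bounds(2)[OF cont_g[OF Tpos]]) (use pw[OF T] in auto)
    have hi: "integral Iset (\<lambda>y. cmod (deriv (phiT \<phi> T) (Complex (1/T) y)) powr 0) \<le> 2 * exp (\<bar>0\<bar> * (K * ln T))"
      by (rule Iset_powr_bounds(3)[OF cont_g[OF Tpos]]) (use pw[OF T] in auto)
    have "integral Iset (\<lambda>y. cmod (deriv (phiT \<phi> T) (Complex (1/T) y)) powr 0) = 2" using lo hi by simp
    then show "FF T 0 = ln 2 / ln T" unfolding FF_def beta_phiT[OF Tpos] by simp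
  next
    fix T a b u v :: real assume T: "T \<ge> T1" and u: "u \<ge> 0" and v: "v \<ge> 0" and uv: "u + v = 1"
    have Tpos: "T > 0" using T T1 by simp
    have lnT: "ln T > 0" using T T1 by simp
    have "ln (integral Iset (\<lambda>y. cmod (deriv (phiT \<phi> T) (Complex (1/T) y)) powr (u * a + v * b)))
          \<le> u * ln (integral Iset (\<lambda>y. cmod (deriv (phiT \<phi> T) (Complex (1/T) y)) powr a))
            + v * ln (integral Iset (\<lambda>y. cmod (deriv (phiT \<phi> T) (Complex (1/T) y)) powr b))"
      by (rule Iset_logconvex[OF cont_g[OF Tpos] _ _ u v uv]) (use pw[OF T] in auto)
    then have "ln (integral Iset (\<lambda>y. cmod (deriv (phiT \<phi> T) (Complex (1/T) y)) powr (u * a + v * b))) / ln T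
          \<le> (u * ln (integral Iset (\<lambda>y. cmod (deriv (phiT \<phi> T) (Complex (1/T) y)) powr a))
            + v * ln (integral Iset (\<lambda>y. cmod (deriv (phiT \<phi> T) (Complex (1/T) y)) powr b))) / ln T"
      using lnT by (intro divide_right_mono) auto
    then show "FF T (u * a + v * b) \<le> u * FF T a + v * FF T b"
      unfolding FF_def beta_phiT[OF Tpos] by (simp add: add_divide_distrib)
  qed
qed

lemma FF2:
  obtains T2 C where "T2 \<ge> 3" "C > 0" "\<And>T. T \<ge> T2 \<Longrightarrow> FF T 2 \<le> 1 + ln C / ln T"
proof -
  obtain T2 C where C: "C > 0" and T2: "T2 \<ge> 3"
    and I: "\<And>T. T \<ge> T2 \<Longrightarrow> integral Iset (\<lambda>y. cmod (deriv (phiT \<phi> T) (Complex (1/T) y)) powr 2) \<le> C * T"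
    by (rule int2) blast
  obtain T1 K where T1: "T1 \<ge> 3" and K: "K \<ge> 0"
    and pw: "\<And>T y. T \<ge> T1 \<Longrightarrow> y \<in> Iset \<Longrightarrow> cmod (deriv (phiT \<phi> T) (Complex (1/T) y)) > 0 \<and>
        \<bar>ln (cmod (deriv (phiT \<phi> T) (Complex (1/T) y)))\<bar> \<le> K * ln T"
    by (rule ptwise) blast
  show ?thesis
  proof
    show "max T1 T2 \<ge> 3" using T2 by simp
    show "C > 0" by (rule C)
    fix T assume T: "max T1 T2 \<le> T"
    then have TT1: "T \<ge> T1" and TT2: "T \<ge> T2" by auto
    have Tpos: "T > 0" using TT2 T2 by simp
    have lnT: "ln T > 0" using TT2 T2 by simp
    have lo: "2 * exp (- \<bar>2\<bar> * (K * ln T)) \<le> integral Iset (\<lambda>y. cmod (deriv (phiT \<phi> T) (Complex (1/T) y)) powr 2)"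
      by (rule Iset_powr_bounds(2)[OF cont_g[OF Tpos]]) (use pw[OF TT1] in auto)
    have ipos: "integral Iset (\<lambda>y. cmod (deriv (phiT \<phi> T) (Complex (1/T) y)) powr 2) > 0"
      using lo by (smt (verit) exp_gt_zero)
    have "ln (integral Iset (\<lambda>y. cmod (deriv (phiT \<phi> T) (Complex (1/T) y)) powr 2)) \<le> ln (C * T)"
      using I[OF TT2] ipos by simp
    also have "\<dots> = ln C + ln T" using C Tpos by (simp add: ln_mult)
    finally have "FF T 2 \<le> (ln C + ln T) / ln T"
      unfolding FF_def beta_phiT[OF Tpos] using lnT by (intro divide_right_mono) auto
    also have "\<dots> = 1 + ln C / ln T" using lnT by (simp add: field_simps)
    finally show "FF T 2 \<le> 1 + ln C / ln T" .
  qed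
qed

end


context PS begin

lemma main_PS:
  shows "(\<forall>t. \<bar>beta_inf \<phi> t\<bar> \<noteq> \<infinity>)
    \<and> convex_on UNIV (\<lambda>t. real_of_ereal (beta_inf \<phi> t))
    \<and> beta_inf \<phi> 0 = 0
    \<and> beta_inf \<phi> 2 \<le> 1"
proof -
  obtain T1 K where T1: "T1 \<ge> 3" and K: "K \<ge> 0"
    and Fb: "\<And>T t. T \<ge> T1 \<Longrightarrow> \<bar>FF T t - ln 2 / ln T\<bar> \<le> \<bar>t\<bar> * K"
    and F0: "\<And>T. T \<ge> T1 \<Longrightarrow> FF T 0 = ln 2 / ln T"
    and Fc: "\<And>T a b u v. T \<ge> T1 \<Longrightarrow> u \<ge> 0 \<Longrightarrow> v \<ge> 0 \<Longrightarrow> u + v = 1 \<Longrightarrow>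
        FF T (u * a + v * b) \<le> u * FF T a + v * FF T b"
    by (rule FF_facts) blast
  obtain T2 C where T2: "T2 \<ge> 3" and C: "C > 0" and F2: "\<And>T. T \<ge> T2 \<Longrightarrow> FF T 2 \<le> 1 + ln C / ln T"
    by (rule FF2) blast
  have bi: "beta_inf \<phi> t = Limsup at_top (\<lambda>T. ereal (FF T t))" for t
    by (simp add: beta_inf_def FF_def)
  have ntriv: "(at_top :: real filter) \<noteq> bot" using trivial_limit_at_top_linorder by blast
  have evT1: "eventually (\<lambda>T. T \<ge> T1) (at_top :: real filter)" by (rule eventually_ge_at_top)
  have bnd: "\<bar>FF T t\<bar> \<le> ln 2 + \<bar>t\<bar> * K" if "T \<ge> T1" for T t
  proof -
    have lnT: "ln T \<ge> 1"
    proof -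
      have "exp 1 \<le> (3::real)" using exp_le by simp
      then have "exp 1 \<le> T" using that T1 by simp
      then show ?thesis using that T1 by (metis exp_le_cancel_iff exp_ln less_le_trans zero_less_numeral)
    qed
    have "ln 2 / ln T \<le> ln 2" using lnT by (simp add: divide_le_eq)
    moreover have "ln 2 / ln T \<ge> 0" using lnT by simp
    ultimately show ?thesis using Fb[OF that, of t] by linarith
  qed
  have fin: "\<bar>beta_inf \<phi> t\<bar> \<noteq> \<infinity>" for t
  proof -
    have ev: "eventually (\<lambda>T. ereal (FF T t) \<le> ereal (ln 2 + \<bar>t\<bar> * K) \<and>
                 ereal (- (ln 2 + \<bar>t\<bar> * K)) \<le> ereal (FF T t)) at_top"
      using evT1
    proof eventually_elim
      case (elim T)
      have "\<bar>FF T t\<bar> \<le> ln 2 + \<bar>t\<bar> * K" by (rule bnd[OF elim])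
      then show ?case by (simp add: abs_le_iff)
    qed
    have up: "beta_inf \<phi> t \<le> ereal (ln 2 + \<bar>t\<bar> * K)" unfolding bi
      by (rule Limsup_bounded) (use ev in \<open>eventually_elim, simp\<close>)
    have lo: "ereal (- (ln 2 + \<bar>t\<bar> * K)) \<le> beta_inf \<phi> t" unfolding bi
      by (rule le_Limsup[OF ntriv]) (use ev in \<open>eventually_elim, simp\<close>)
    show ?thesis using up lo by auto
  qed
  define L where "L = (\<lambda>t. real_of_ereal (beta_inf \<phi> t))"
  have eL: "beta_inf \<phi> t = ereal (L t)" for t using fin[of t] by (simp add: L_def ereal_real')
  have z: "beta_inf \<phi> 0 = 0"
  proof -
    have "((\<lambda>T. ln 2 / ln T) \<longlongrightarrow> 0) (at_top :: real filter)"
      by (rule tendsto_divide_0[OF tendsto_const filterlim_at_top_imp_at_infinity[OF ln_at_top]])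
    then have "((\<lambda>T. ereal (ln 2 / ln T)) \<longlongrightarrow> ereal 0) (at_top :: real filter)"
      by (rule tendsto_ereal)
    moreover have "eventually (\<lambda>T. ereal (ln 2 / ln T) = ereal (FF T 0)) (at_top :: real filter)"
      using evT1 by eventually_elim (simp add: F0)
    ultimately have "((\<lambda>T. ereal (FF T 0)) \<longlongrightarrow> ereal 0) (at_top :: real filter)"
      by (rule Lim_transform_eventually)
    then have "Limsup at_top (\<lambda>T. ereal (FF T 0)) = ereal 0"
      by (intro lim_imp_Limsup) simp_all
    then show ?thesis unfolding bi by (simp add: zero_ereal_def)
  qed
  have two: "beta_inf \<phi> 2 \<le> 1"
  proof -
    have "((\<lambda>T. 1 + ln C / ln T) \<longlongrightarrow> 1 + 0) (at_top :: real filter)"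
      by (intro tendsto_add tendsto_const tendsto_divide_0[OF tendsto_const filterlim_at_top_imp_at_infinity[OF ln_at_top]])
    then have "((\<lambda>T. ereal (1 + ln C / ln T)) \<longlongrightarrow> ereal 1) (at_top :: real filter)"
      by (intro tendsto_ereal) simp
    then have l1: "Limsup at_top (\<lambda>T. ereal (1 + ln C / ln T)) = ereal 1"
      by (intro lim_imp_Limsup) simp_all
    have "Limsup at_top (\<lambda>T. ereal (FF T 2)) \<le> Limsup at_top (\<lambda>T. ereal (1 + ln C / ln T))"
      by (rule Limsup_mono) (use eventually_ge_at_top[of T2] in \<open>eventually_elim, use F2 in auto\<close>)
    then show ?thesis unfolding bi l1 by (simp add: one_ereal_def)
  qed
  have cvx: "convex_on UNIV L"
  proof (rule convex_onI)
    fix \<theta> x y :: real assume th: "0 < \<theta>" "\<theta> < 1"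
    define tg where "tg = (1 - \<theta>) * L x + \<theta> * L y"
    have "beta_inf \<phi> ((1 - \<theta>) * x + \<theta> * y) \<le> ereal tg"
      unfolding bi Limsup_le_iff
    proof (intro allI impI)
      fix z assume zg: "ereal tg < z"
      obtain r where r: "ereal tg < ereal r" "ereal r < z" using ereal_dense2[OF zg] by blast
      define \<delta> where "\<delta> = r - tg"
      have d: "\<delta> > 0" using r by (simp add: \<delta>_def)
      have ex: "eventually (\<lambda>T. ereal (FF T x) < ereal (L x + \<delta>/2)) at_top"
        by (rule Limsup_lessD) (use d eL[of x] bi[of x] in simp)
      have ey: "eventually (\<lambda>T. ereal (FF T y) < ereal (L y + \<delta>/2)) at_top"
        by (rule Limsup_lessD) (use d eL[of y] bi[of y] in simp)
      show "eventually (\<lambda>T. z > ereal (FF T ((1 - \<theta>) * x + \<theta> * y))) at_top"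
        using ex ey evT1
      proof eventually_elim
        case (elim T)
        have a: "FF T x < L x + \<delta>/2" "FF T y < L y + \<delta>/2" using elim by auto
        have "FF T ((1 - \<theta>) * x + \<theta> * y) \<le> (1 - \<theta>) * FF T x + \<theta> * FF T y"
          using Fc[OF elim(3), of "1 - \<theta>" \<theta> x y] th by simp
        also have "\<dots> \<le> (1 - \<theta>) * (L x + \<delta>/2) + \<theta> * (L y + \<delta>/2)"
          using a th by (intro add_mono mult_left_mono) auto
        also have "\<dots> = tg + \<delta>/2" by (simp add: tg_def field_simps)
        also have "\<dots> < r" using d by (simp add: \<delta>_def field_simps)
        finally have "ereal (FF T ((1 - \<theta>) * x + \<theta> * y)) < ereal r" by simp
        then show ?case using r(2) by (rule less_trans)
      qed
    qed
    then show "L ((1 - \<theta>) *\<^sub>R x + \<theta> *\<^sub>R y) \<le> (1 - \<theta>) * L x + \<theta> * L y"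
      using eL[of "(1 - \<theta>) * x + \<theta> * y"] by (simp add: tg_def)
  qed simp
  show ?thesis using fin cvx z two by (simp add: L_def)
qed

end

theorem proposition3p3:
  fixes \<Omega> :: "complex set" and \<phi> :: "complex \<Rightarrow> complex" and \<gamma> :: real
  assumes gamma: "0 < \<gamma>" "\<gamma> < 1"
    and Omega_sub: "\<Omega> \<subseteq> {z. cmod z > exp \<gamma>}"
    and Omega_open: "open \<Omega>" and Omega_conn: "connected \<Omega>"
    and Omega_sc: "simply_connected \<Omega>"
    and Omega_unb: "\<not> bounded \<Omega>"
    and holo: "\<phi> holomorphic_on halfplane"
    and inj: "inj_on \<phi> halfplane"
    and onto: "\<phi> ` halfplane = \<Omega>"
    and proper: "\<And>\<xi> :: nat \<Rightarrow> complex. (\<forall>n. \<xi> n \<in> halfplane) \<Longrightarrow>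
        filterlim (\<lambda>n. cmod (\<xi> n)) at_top sequentially \<Longrightarrow>
        filterlim (\<lambda>n. cmod (\<phi> (\<xi> n))) at_top sequentially"
    and doubling: "\<exists>M T0. \<forall>T\<ge>T0. \<forall>\<xi>\<in>QT T - QT (T / 8). \<forall>\<xi>'\<in>QT T - QT (T / 8).
        cmod (\<phi> \<xi>) \<le> M * cmod (\<phi> \<xi>')"
  shows "(\<forall>t. \<bar>beta_inf \<phi> t\<bar> \<noteq> \<infinity>)
    \<and> convex_on UNIV (\<lambda>t. real_of_ereal (beta_inf \<phi> t))
    \<and> beta_inf \<phi> 0 = 0
    \<and> beta_inf \<phi> 2 \<le> 1"
proof -
  obtain M T0 where dbl: "\<forall>T\<ge>T0. \<forall>\<xi>\<in>QT T - QT (T / 8). \<forall>\<xi>'\<in>QT T - QT (T / 8).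
        cmod (\<phi> \<xi>) \<le> M * cmod (\<phi> \<xi>')" using doubling by blast
  interpret PS \<phi> \<gamma> M T0
  proof
    show "0 < \<gamma>" by (rule gamma(1))
    show "\<phi> holomorphic_on halfplane" by (rule holo)
    show "inj_on \<phi> halfplane" by (rule inj)
    show "exp \<gamma> < cmod (\<phi> \<xi>)" if "\<xi> \<in> halfplane" for \<xi>
      using that onto Omega_sub by blast
    show "open (\<phi> ` halfplane)" using onto Omega_open by simp
    show "cmod (\<phi> \<xi>) \<le> M * cmod (\<phi> \<xi>')" if "T0 \<le> T" "\<xi> \<in> QT T - QT (T / 8)" "\<xi>' \<in> QT T - QT (T / 8)"
      for T \<xi> \<xi>' using dbl that by blast
  qed
  show ?thesis by (rule main_PS)
qed


end
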